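(* Let $f$ be a ternary cubic form, and fix $(u_1,u_2,u_3)\in\mathbb C^3$ such that the value $F_{6u}(u_1,u_2,u_3)$ is nonzero. The following are equivalent: (1) $f$ is completely reducible, i.e. a product of three linear forms; (2) $\Delta$ is a scalar multiple of $f$; (3) $\Pi$, evaluated at this fixed $u$, is the zero polynomial in $x$; (4) $\Gamma$, evaluated at this fixed $u$, is the zero polynomial in $x$.
   Context: All forms are homogeneous polynomials with complex coefficients in $x=(x_1,x_2,x_3)$, whose coefficients may also depend polynomially on auxiliary indeterminates $u=(u_1,u_2,u_3)$, with $u_x=u_1x_1+u_2x_2+u_3x_3$. For forms $f,g,h$ and $n\ge1$ the $n$-th transvectant is $J^n[f,g,h]=\big(\Omega^n(f(x)g(y)h(z))\big)\big|_{y=z=x}$, where $\Omega$ is the determinant of the $3\times3$ matrix of operators with rows $(\partial/\partial x_i)_i$, $(\partial/\partial y_i)_i$, $(\partial/\partial z_i)_i$. All derivatives are in $x,y,z$ only, with $u$ treated as a constant. Write $J=J^1$. For a ternary cubic $f$: - $\theta=\tfrac14J^2[f,f,u_x^2]$; - $\Delta=\tfrac1{12}J^2[f,f,f]$ (the Hessian); - $\Pi=\tfrac1{12}J[\Delta,f,u_x]$; - $\Gamma=\tfrac1{432}J^3[\Pi,f,u_x^3]$; - $F_{6u}=\tfrac1{3072}J^2[\theta,\theta,u_x^2]$, a form of degree 6 in $u$ only. *)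

theory Defs
  imports Complex_Main
begin

text \<open>Polynomials in x = (x1,x2,x3) with complex coefficients, represented by their
coefficient function on exponent triples (i,j,k), i.e. the coefficient of x1^i x2^j x3^k.\<close>

type_synonym mono = "nat \<times> nat \<times> nat"
type_synonym pol = "mono \<Rightarrow> complex"

definition pzero :: pol where "pzero = (\<lambda>_. 0)"

definition padd :: "pol \<Rightarrow> pol \<Rightarrow> pol" where
  "padd p q = (\<lambda>m. p m + q m)"

definition psmult :: "complex \<Rightarrow> pol \<Rightarrow> pol" where
  "psmult c p = (\<lambda>m. c * p m)"

definition pmult :: "pol \<Rightarrow> pol \<Rightarrow> pol" where
  "pmult p q = (\<lambda>(i,j,k). \<Sum>a\<le>i. \<Sum>b\<le>j. \<Sum>c\<le>k. p (a,b,c) * q (i-a, j-b, k-c))"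

definition mdeg :: "mono \<Rightarrow> nat" where
  "mdeg m = (case m of (i,j,k) \<Rightarrow> i + j + k)"

definition is_form :: "nat \<Rightarrow> pol \<Rightarrow> bool" where
  "is_form d p \<longleftrightarrow> (\<forall>m. p m \<noteq> 0 \<longrightarrow> mdeg m = d)"

text \<open>Formal partial derivative with respect to x_(i+1), i \<in> {0,1,2}\<close>
definition pderiv3 :: "nat \<Rightarrow> pol \<Rightarrow> pol" where
  "pderiv3 i p = (\<lambda>(a,b,c).
     if i = 0 then of_nat (a+1) * p (a+1,b,c)
     else if i = 1 then of_nat (b+1) * p (a,b+1,c)
     else of_nat (c+1) * p (a,b,c+1))"

text \<open>Terms (sign, column for x-row, column for y-row, column for z-row) of the
determinant Omega = sum over permutations sigma of sgn(sigma) d/dx_sigma(1) d/dy_sigma(2) d/dz_sigma(3).\<close>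
definition omega_terms :: "(complex \<times> nat \<times> nat \<times> nat) list" where
  "omega_terms = [(1,0,1,2), (-1,0,2,1), (-1,1,0,2), (1,1,2,0), (1,2,0,1), (-1,2,1,0)]"

text \<open>An element of C[x] (x) C[y] (x) C[z] is represented as a finite sum (list) of simple
tensors f(x) g(y) h(z); Omega acts on a simple tensor by differentiating each factor in its
own variables.\<close>
definition omega_step :: "(pol \<times> pol \<times> pol) list \<Rightarrow> (pol \<times> pol \<times> pol) list" where
  "omega_step ts = concat (map (\<lambda>(f,g,h).
      map (\<lambda>(s,i,j,k). (psmult s (pderiv3 i f), pderiv3 j g, pderiv3 k h)) omega_terms) ts)"

text \<open>n-th transvectant: apply Omega^n to f(x)g(y)h(z), then set y = z = x.\<close>
definition transv :: "nat \<Rightarrow> pol \<Rightarrow> pol \<Rightarrow> pol \<Rightarrow> pol" where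
  "transv n f g h = foldr padd (map (\<lambda>(a,b,c). pmult (pmult a b) c)
                                    ((omega_step ^^ n) [(f,g,h)])) pzero"

definition ux :: "complex \<Rightarrow> complex \<Rightarrow> complex \<Rightarrow> pol" where
  "ux u1 u2 u3 = (\<lambda>m. if m = (1,0,0) then u1 else if m = (0,1,0) then u2
                      else if m = (0,0,1) then u3 else 0)"

definition theta_u :: "pol \<Rightarrow> complex \<Rightarrow> complex \<Rightarrow> complex \<Rightarrow> pol" where
  "theta_u f u1 u2 u3 = psmult (1/4) (transv 2 f f (pmult (ux u1 u2 u3) (ux u1 u2 u3)))"

definition hessian :: "pol \<Rightarrow> pol" where
  "hessian f = psmult (1/12) (transv 2 f f f)"

definition Pi_u :: "pol \<Rightarrow> complex \<Rightarrow> complex \<Rightarrow> complex \<Rightarrow> pol" where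
  "Pi_u f u1 u2 u3 = psmult (1/12) (transv 1 (hessian f) f (ux u1 u2 u3))"

definition Gamma_u :: "pol \<Rightarrow> complex \<Rightarrow> complex \<Rightarrow> complex \<Rightarrow> pol" where
  "Gamma_u f u1 u2 u3 = psmult (1/432)
     (transv 3 (Pi_u f u1 u2 u3) f (pmult (ux u1 u2 u3) (pmult (ux u1 u2 u3) (ux u1 u2 u3))))"

text \<open>F_6u evaluated at u: J^2[theta,theta,u_x^2] has degree 0 in x; its value is its
constant coefficient.\<close>
definition F6u_val :: "pol \<Rightarrow> complex \<Rightarrow> complex \<Rightarrow> complex \<Rightarrow> complex" where
  "F6u_val f u1 u2 u3 = (1/3072) *
     transv 2 (theta_u f u1 u2 u3) (theta_u f u1 u2 u3) (pmult (ux u1 u2 u3) (ux u1 u2 u3)) (0,0,0)"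

definition completely_reducible :: "pol \<Rightarrow> bool" where
  "completely_reducible f \<longleftrightarrow>
     (\<exists>l1 l2 l3. is_form 1 l1 \<and> is_form 1 l2 \<and> is_form 1 l3 \<and> f = pmult (pmult l1 l2) l3)"

end

theory Submission
  imports Defs "HOL-Computational_Algebra.Formal_Power_Series" "HOL-Computational_Algebra.Fundamental_Theorem_Algebra"
begin


type_synonym F3 = "complex fps fps fps"

definition cf :: "F3 \<Rightarrow> mono \<Rightarrow> complex" where
  "cf F m = (case m of (i,j,k) \<Rightarrow> fps_nth (fps_nth (fps_nth F i) j) k)"
definition T :: "pol \<Rightarrow> F3" where
  "T p = Abs_fps (\<lambda>i. Abs_fps (\<lambda>j. Abs_fps (\<lambda>k. p (i,j,k))))"

lemma cf_T[simp]: "cf (T p) = p" by (auto simp: cf_def T_def fun_eq_iff)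

lemma cf_inj: assumes "cf F = cf G" shows "F = G"
proof (rule fps_ext)
  fix i show "fps_nth F i = fps_nth G i"
  proof (rule fps_ext)
    fix j show "fps_nth (fps_nth F i) j = fps_nth (fps_nth G i) j"
    proof (rule fps_ext)
      fix k show "fps_nth (fps_nth (fps_nth F i) j) k = fps_nth (fps_nth (fps_nth G i) j) k"
        using fun_cong[OF assms, of "(i,j,k)"] by (simp add: cf_def)
    qed
  qed
qed

lemma F_eq_iff: "F = G \<longleftrightarrow> cf F = cf G" using cf_inj by auto
lemma T_cf[simp]: "T (cf F) = F" by (rule cf_inj) simp

definition C :: "complex \<Rightarrow> F3" where "C c = fps_const (fps_const (fps_const c))"

lemma cf_add[simp]: "cf (F + G) m = cf F m + cf G m" by (simp add: cf_def split: prod.split)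
lemma cf_diff[simp]: "cf (F - G) m = cf F m - cf G m" by (simp add: cf_def split: prod.split)
lemma cf_neg[simp]: "cf (- F) m = - cf F m" by (simp add: cf_def split: prod.split)
lemma cf_zero[simp]: "cf 0 m = 0" by (simp add: cf_def split: prod.split)
lemma cf_C[simp]: "cf (C c) m = (if m = (0,0,0) then c else 0)" by (simp add: cf_def C_def split: prod.split)
lemma cf_one[simp]: "cf 1 m = (if m = (0,0,0) then 1 else 0)"
  using cf_C[of 1 m] by (simp add: C_def)
lemma cf_Cmult[simp]: "cf (C c * F) m = c * cf F m" by (simp add: cf_def C_def split: prod.split)
lemma cf_multC[simp]: "cf (F * C c) m = cf F m * c" by (simp add: cf_def C_def split: prod.split)
lemma cf_sum: "cf (sum f S) m = (\<Sum>x\<in>S. cf (f x) m)" by (simp add: cf_def fps_sum_nth split: prod.split)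

lemma cf_mult: "cf (F * G) = pmult (cf F) (cf G)"
  by (auto simp: cf_def pmult_def fps_mult_nth fps_sum_nth atLeast0AtMost fun_eq_iff)

lemma C_add[simp]: "C (a + b) = C a + C b" by (simp add: C_def)
lemma C_mult[simp]: "C (a * b) = C a * C b" by (simp add: C_def)
lemma C_0[simp]: "C 0 = 0" by (simp add: C_def)
lemma C_1[simp]: "C 1 = 1" by (simp add: C_def)
lemma C_neg[simp]: "C (- a) = - C a" by (simp add: C_def)
lemma C_diff[simp]: "C (a - b) = C a - C b" by (simp add: C_def)
lemma C_pow[simp]: "C (a ^ n) = C a ^ n" by (simp add: C_def)
lemma C_numeral[simp]: "C (numeral n) = numeral n"
  by (simp add: C_def fps_numeral_fps_const)
lemma C_of_nat[simp]: "C (of_nat n) = of_nat n"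
  by (simp add: C_def fps_of_nat)

lemma T_padd[simp]: "T (padd p q) = T p + T q" by (rule cf_inj) (simp add: padd_def fun_eq_iff)
lemma T_pzero[simp]: "T pzero = 0" by (rule cf_inj) (simp add: pzero_def fun_eq_iff)
lemma T_psmult[simp]: "T (psmult c p) = C c * T p" by (rule cf_inj) (simp add: psmult_def fun_eq_iff)
lemma T_pmult[simp]: "T (pmult p q) = T p * T q" by (rule cf_inj) (simp add: cf_mult)
lemma T_eq_iff: "T p = T q \<longleftrightarrow> p = q" by (metis cf_T)

definition liftD :: "('a \<Rightarrow> 'a) \<Rightarrow> 'a fps \<Rightarrow> 'a fps" where
  "liftD D F = Abs_fps (\<lambda>i. D (fps_nth F i))"

lemma liftD_sum_aux:
  assumes add: "\<And>a b. D (a + b) = D a + D b" and z: "D 0 = 0"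
  shows "D (sum f S) = (\<Sum>x\<in>S. D (f x))"
proof (cases "finite S")
  case True then show ?thesis by (induct S rule: finite_induct) (simp_all add: z add)
next
  case False then show ?thesis by (simp add: z)
qed

lemma liftD_add: assumes add: "\<And>a b. D (a + b) = D a + D b"
  shows "liftD D (F + G) = liftD D F + liftD D G"
  by (rule fps_ext) (simp add: liftD_def add)

lemma liftD_zero: assumes z: "D 0 = 0" shows "liftD D 0 = 0"
  by (rule fps_ext) (simp add: liftD_def z)

lemma liftD_mult:
  fixes D :: "'a::comm_ring_1 \<Rightarrow> 'a"
  assumes add: "\<And>a b. D (a + b) = D a + D b" and z: "D 0 = 0"
    and mult: "\<And>a b. D (a * b) = D a * b + a * D b"
  shows "liftD D (F * G) = liftD D F * G + F * liftD D G"
proof (rule fps_ext)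
  fix n
  have "fps_nth (liftD D (F * G)) n = (\<Sum>i=0..n. D (fps_nth F i * fps_nth G (n - i)))"
    by (simp add: liftD_def fps_mult_nth liftD_sum_aux[OF add z])
  also have "\<dots> = (\<Sum>i=0..n. D (fps_nth F i) * fps_nth G (n - i)) + (\<Sum>i=0..n. fps_nth F i * D (fps_nth G (n - i)))"
    by (simp add: mult sum.distrib)
  also have "\<dots> = fps_nth (liftD D F * G + F * liftD D G) n"
    by (simp add: liftD_def fps_mult_nth)
  finally show "fps_nth (liftD D (F * G)) n = fps_nth (liftD D F * G + F * liftD D G) n" .
qed

definition D1 :: "complex fps fps \<Rightarrow> complex fps fps" where "D1 = liftD fps_deriv"

lemma D1_add: "D1 (a + b) = D1 a + D1 b" unfolding D1_def by (rule liftD_add) simp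
lemma D1_zero: "D1 0 = 0" unfolding D1_def by (rule liftD_zero) simp
lemma D1_mult: "D1 (a * b) = D1 a * b + a * D1 b" unfolding D1_def by (rule liftD_mult) simp_all

definition DD :: "nat \<Rightarrow> F3 \<Rightarrow> F3" where
  "DD i F = (if i = 0 then fps_deriv F else if i = 1 then liftD fps_deriv F else liftD D1 F)"

lemma DD_mult: "DD i (F * G) = DD i F * G + F * DD i G"
proof -
  have "liftD fps_deriv (F * G) = liftD fps_deriv F * G + F * liftD fps_deriv G"
    by (rule liftD_mult) simp_all
  moreover have "liftD D1 (F * G) = liftD D1 F * G + F * liftD D1 G"
    by (rule liftD_mult) (simp_all add: D1_add D1_zero D1_mult)
  ultimately show ?thesis by (simp add: DD_def)
qed

lemma cf_DD: "cf (DD i F) = pderiv3 i (cf F)"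
  by (auto simp: DD_def cf_def pderiv3_def liftD_def D1_def fun_eq_iff fps_of_nat[symmetric])

lemma DD_add[simp]: "DD i (F + G) = DD i F + DD i G"
  by (rule cf_inj) (simp add: cf_DD pderiv3_def fun_eq_iff algebra_simps)
lemma DD_diff[simp]: "DD i (F - G) = DD i F - DD i G"
  by (rule cf_inj) (simp add: cf_DD pderiv3_def fun_eq_iff algebra_simps)
lemma DD_neg[simp]: "DD i (- F) = - DD i F"
  by (rule cf_inj) (simp add: cf_DD pderiv3_def fun_eq_iff algebra_simps)
lemma DD_zero[simp]: "DD i 0 = 0"
  by (rule cf_inj) (simp add: cf_DD pderiv3_def fun_eq_iff algebra_simps)
lemma DD_C[simp]: "DD i (C c) = 0"
  by (rule cf_inj) (simp add: cf_DD pderiv3_def fun_eq_iff algebra_simps)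
lemma DD_Cmult[simp]: "DD i (C c * F) = C c * DD i F"
  by (rule cf_inj) (simp add: cf_DD pderiv3_def fun_eq_iff mult_ac)
lemma DD_one[simp]: "DD i 1 = 0" using DD_C[of i 1] by simp
lemma DD_numeral[simp]: "DD i (numeral n) = 0" using DD_C[of i "numeral n"] by simp
lemma DD_of_nat[simp]: "DD i (of_nat n) = 0" using DD_C[of i "of_nat n"] by simp
lemma DD_sum: "DD i (sum f S) = (\<Sum>x\<in>S. DD i (f x))"
  by (rule liftD_sum_aux) simp_all
lemma DD_power: "DD i (F ^ n) = of_nat n * F ^ (n - 1) * DD i F"
proof (induct n)
  case 0 then show ?case by simp
next
  case (Suc n) then show ?case
    by (cases n) (simp_all add: DD_mult algebra_simps)
qed

lemma T_pderiv3[simp]: "T (pderiv3 i p) = DD i (T p)"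
  by (rule cf_inj) (simp add: cf_DD)

definition X0 :: F3 where "X0 = fps_X"
definition X1 :: F3 where "X1 = fps_const fps_X"
definition X2 :: F3 where "X2 = fps_const (fps_const fps_X)"

lemma cf_X0: "cf X0 m = (if m = (1,0,0) then 1 else 0)"
  by (auto simp: cf_def X0_def fps_X_def split: prod.split)
lemma cf_X1: "cf X1 m = (if m = (0,1,0) then 1 else 0)"
  by (auto simp: cf_def X1_def fps_X_def split: prod.split)
lemma cf_X2: "cf X2 m = (if m = (0,0,1) then 1 else 0)"
  by (auto simp: cf_def X2_def fps_X_def split: prod.split)

lemma DD_X[simp]:
  "DD 0 X0 = 1" "DD 1 X0 = 0" "DD 2 X0 = 0"
  "DD 0 X1 = 0" "DD 1 X1 = 1" "DD 2 X1 = 0"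
  "DD 0 X2 = 0" "DD 1 X2 = 0" "DD 2 X2 = 1"
  by (rule cf_inj, auto simp: cf_DD fun_eq_iff pderiv3_def cf_X0 cf_X1 cf_X2 cf_one)+

fun transvF :: "nat \<Rightarrow> F3 \<Rightarrow> F3 \<Rightarrow> F3 \<Rightarrow> F3" where
  "transvF 0 F G H = F * G * H"
| "transvF (Suc n) F G H =
     transvF n (DD 0 F) (DD 1 G) (DD 2 H) - transvF n (DD 0 F) (DD 2 G) (DD 1 H)
   - transvF n (DD 1 F) (DD 0 G) (DD 2 H) + transvF n (DD 1 F) (DD 2 G) (DD 0 H)
   + transvF n (DD 2 F) (DD 0 G) (DD 1 H) - transvF n (DD 2 F) (DD 1 G) (DD 0 H)"

lemma transvF_add1: "transvF n (F + F') G H = transvF n F G H + transvF n F' G H"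
  by (induct n arbitrary: F F' G H) (simp_all add: algebra_simps)
lemma transvF_add2: "transvF n F (G + G') H = transvF n F G H + transvF n F G' H"
  by (induct n arbitrary: F G G' H) (simp_all add: algebra_simps)
lemma transvF_add3: "transvF n F G (H + H') = transvF n F G H + transvF n F G H'"
  by (induct n arbitrary: F G H H') (simp_all add: algebra_simps)
lemma transvF_C1: "transvF n (C c * F) G H = C c * transvF n F G H"
  by (induct n arbitrary: F G H) (simp_all add: distrib_left right_diff_distrib mult.assoc mult.left_commute[of "C c"])
lemma transvF_C2: "transvF n F (C c * G) H = C c * transvF n F G H"
  by (induct n arbitrary: F G H) (simp_all add: distrib_left right_diff_distrib mult.assoc mult.left_commute[of "C c"])
lemma transvF_C3: "transvF n F G (C c * H) = C c * transvF n F G H"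
  by (induct n arbitrary: F G H) (simp_all add: distrib_left right_diff_distrib mult.assoc mult.left_commute[of "C c"])
lemma transvF_zero1[simp]: "transvF n 0 G H = 0"
  by (induct n arbitrary: G H) simp_all
lemma transvF_zero2[simp]: "transvF n F 0 H = 0"
  by (induct n arbitrary: F H) simp_all
lemma transvF_zero3[simp]: "transvF n F G 0 = 0"
  by (induct n arbitrary: F G) simp_all
lemma transvF_neg1: "transvF n (- F) G H = - transvF n F G H"
  using transvF_C1[of n "-1" F G H] by simp
lemma transvF_neg2: "transvF n F (- G) H = - transvF n F G H"
  using transvF_C2[of n F "-1" G H] by simp
lemma transvF_neg3: "transvF n F G (- H) = - transvF n F G H"
  using transvF_C3[of n F G "-1" H] by simp
lemma transvF_diff1: "transvF n (F - F') G H = transvF n F G H - transvF n F' G H"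
  using transvF_add1[of n F "- F'"] transvF_neg1 by simp
lemma transvF_diff2: "transvF n F (G - G') H = transvF n F G H - transvF n F G' H"
  using transvF_add2[of n F G "- G'"] transvF_neg2 by simp
lemma transvF_diff3: "transvF n F G (H - H') = transvF n F G H - transvF n F G H'"
  using transvF_add3[of n F G H "- H'"] transvF_neg3 by simp

lemmas transvF_lin = transvF_add1 transvF_add2 transvF_add3 transvF_C1 transvF_C2 transvF_C3
  transvF_neg1 transvF_neg2 transvF_neg3 transvF_diff1 transvF_diff2 transvF_diff3

lemma T_foldr: "T (foldr padd (map \<phi> ts) pzero) = sum_list (map (T \<circ> \<phi>) ts)"
  by (induct ts) simp_all

lemma omega_step_append: "omega_step (xs @ ys) = omega_step xs @ omega_step ys"
  by (simp add: omega_step_def)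

lemma sum_omega_step:
  "sum_list (map (\<lambda>(a,b,c). transvF n (T a) (T b) (T c)) (omega_step ts))
   = sum_list (map (\<lambda>(a,b,c). transvF (Suc n) (T a) (T b) (T c)) ts)"
proof (induct ts)
  case Nil then show ?case by (simp add: omega_step_def)
next
  case (Cons t ts)
  obtain a b c where t: "t = (a,b,c)" by (cases t) auto
  have "omega_step (t # ts) = omega_step [t] @ omega_step ts"
    using omega_step_append[of "[t]" ts] by simp
  then show ?case using Cons
    by (simp add: t omega_step_def omega_terms_def transvF_lin algebra_simps)
qed

lemma T_transv_aux:
  "sum_list (map (\<lambda>(a,b,c). T a * T b * T c) ((omega_step ^^ n) ts))
   = sum_list (map (\<lambda>(a,b,c). transvF n (T a) (T b) (T c)) ts)"
proof (induct n arbitrary: ts)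
  case 0 then show ?case by simp
next
  case (Suc n)
  have "(omega_step ^^ Suc n) ts = (omega_step ^^ n) (omega_step ts)"
    by (simp only: funpow_Suc_right o_apply)
  then show ?case using Suc sum_omega_step by simp
qed

lemma T_transv: "T (transv n f g h) = transvF n (T f) (T g) (T h)"
proof -
  have "T (transv n f g h) = sum_list (map (\<lambda>(a,b,c). T a * T b * T c) ((omega_step ^^ n) [(f,g,h)]))"
    unfolding transv_def T_foldr by (rule arg_cong[where f=sum_list]) (auto simp: fun_eq_iff)
  then show ?thesis using T_transv_aux[of n "[(f,g,h)]"] by simp
qed


definition supp :: "F3 \<Rightarrow> mono set" where "supp F = {m. cf F m \<noteq> 0}"
definition fsupp :: "F3 \<Rightarrow> bool" where "fsupp F \<longleftrightarrow> finite (supp F)"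
definition XM :: "mono \<Rightarrow> F3" where "XM m = (case m of (i,j,k) \<Rightarrow> X0^i * X1^j * X2^k)"
definition madd :: "mono \<Rightarrow> mono \<Rightarrow> mono" where
  "madd m n = (case m of (a,b,c) \<Rightarrow> case n of (d,e,f) \<Rightarrow> (a+d, b+e, c+f))"

lemma cf_of_nat_mult[simp]: "cf (of_nat n * F) m = of_nat n * cf F m"
  using cf_Cmult[of "of_nat n" F m] by (simp del: cf_Cmult)
lemma cf_numeral_mult[simp]: "cf (numeral n * F) m = numeral n * cf F m"
  using cf_Cmult[of "numeral n" F m] by (simp del: cf_Cmult)

lemma cf_XM: "cf (XM m) n = (if n = m then 1 else 0)"
  by (auto simp: cf_def XM_def X0_def X1_def X2_def fps_X_power_mult_nth mult.assoc split: prod.split)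

lemma cf_CXM: "cf (C a * XM m) n = (if n = m then a else 0)"
  by (simp add: cf_XM)

lemma XM_madd: "XM (madd m n) = XM m * XM n"
  by (auto simp: XM_def madd_def power_add mult_ac split: prod.split)

lemma decomp: assumes "finite M" "supp F \<subseteq> M"
  shows "F = (\<Sum>m\<in>M. C (cf F m) * XM m)"
proof (rule cf_inj, rule ext)
  fix n
  have "cf (\<Sum>m\<in>M. C (cf F m) * XM m) n = (\<Sum>m\<in>M. if n = m then cf F m else 0)"
    by (auto simp: cf_sum cf_XM intro!: sum.cong)
  also have "\<dots> = (if n \<in> M then cf F n else 0)"
    using assms(1) by (simp add: sum.delta)
  also have "\<dots> = cf F n" using assms(2) by (auto simp: supp_def)
  finally show "cf F n = cf (\<Sum>m\<in>M. C (cf F m) * XM m) n" by simp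
qed

lemma supp_sum: "supp (sum f I) \<subseteq> (\<Union>i\<in>I. supp (f i))"
proof
  fix n assume "n \<in> supp (sum f I)"
  then have "(\<Sum>i\<in>I. cf (f i) n) \<noteq> 0" by (simp add: supp_def cf_sum)
  then obtain i where "i \<in> I" "cf (f i) n \<noteq> 0" by (meson sum.neutral)
  then show "n \<in> (\<Union>i\<in>I. supp (f i))" by (auto simp: supp_def)
qed

lemma fsupp_sum: "finite I \<Longrightarrow> (\<And>i. i \<in> I \<Longrightarrow> fsupp (f i)) \<Longrightarrow> fsupp (sum f I)"
  unfolding fsupp_def by (rule finite_subset[OF supp_sum]) auto

lemma fsupp_CXM[simp]: "fsupp (C a * XM m)"
proof -
  have "supp (C a * XM m) \<subseteq> {m}" by (auto simp: supp_def cf_XM)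
  then show ?thesis unfolding fsupp_def using finite_subset by blast
qed

lemma fsupp_add[simp]: "fsupp F \<Longrightarrow> fsupp G \<Longrightarrow> fsupp (F + G)"
  unfolding fsupp_def by (rule finite_subset[of _ "supp F \<union> supp G"]) (auto simp: supp_def)
lemma fsupp_Cmult[simp]: "fsupp F \<Longrightarrow> fsupp (C c * F)"
  unfolding fsupp_def by (rule finite_subset[of _ "supp F"]) (auto simp: supp_def)
lemma fsupp_neg[simp]: "fsupp F \<Longrightarrow> fsupp (- F)"
  unfolding fsupp_def by (simp add: supp_def)
lemma fsupp_diff[simp]: "fsupp F \<Longrightarrow> fsupp G \<Longrightarrow> fsupp (F - G)"
  unfolding fsupp_def by (rule finite_subset[of _ "supp F \<union> supp G"]) (auto simp: supp_def)
lemma fsupp_zero[simp]: "fsupp 0" unfolding fsupp_def supp_def by simp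

lemma fsupp_decomp: "fsupp F \<Longrightarrow> F = (\<Sum>m\<in>supp F. C (cf F m) * XM m)"
  by (rule decomp) (auto simp: fsupp_def)

lemma prod_decomp:
  assumes "fsupp F" "fsupp G"
  shows "F * G = (\<Sum>p\<in>supp F \<times> supp G. C (cf F (fst p) * cf G (snd p)) * XM (madd (fst p) (snd p)))"
proof -
  have "F * G = (\<Sum>m\<in>supp F. C (cf F m) * XM m) * (\<Sum>m\<in>supp G. C (cf G m) * XM m)"
    using fsupp_decomp[OF assms(1)] fsupp_decomp[OF assms(2)] by simp
  also have "\<dots> = (\<Sum>m\<in>supp F. \<Sum>m'\<in>supp G. C (cf F m) * XM m * (C (cf G m') * XM m'))"
    by (simp add: sum_product)
  also have "\<dots> = (\<Sum>p\<in>supp F \<times> supp G. C (cf F (fst p)) * XM (fst p) * (C (cf G (snd p)) * XM (snd p)))"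
    by (simp add: sum.cartesian_product case_prod_beta)
  also have "\<dots> = (\<Sum>p\<in>supp F \<times> supp G. C (cf F (fst p) * cf G (snd p)) * XM (madd (fst p) (snd p)))"
    by (simp add: XM_madd mult_ac)
  finally show ?thesis .
qed

lemma fsupp_mult[simp]: "fsupp F \<Longrightarrow> fsupp G \<Longrightarrow> fsupp (F * G)"
  apply (subst prod_decomp, assumption, assumption)
  apply (rule fsupp_sum)
   apply (simp add: fsupp_def)
  apply (simp del: C_mult)
  done

lemma fsupp_C[simp]: "fsupp (C c)"
  using fsupp_CXM[of c "(0,0,0)"] by (simp add: XM_def)
lemma fsupp_one[simp]: "fsupp 1" using fsupp_C[of 1] by simp
lemma fsupp_XM[simp]: "fsupp (XM m)" using fsupp_CXM[of 1 m] by simp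
lemma fsupp_X[simp]: "fsupp X0" "fsupp X1" "fsupp X2"
  using fsupp_XM[of "(1,0,0)"] fsupp_XM[of "(0,1,0)"] fsupp_XM[of "(0,0,1)"] by (simp_all add: XM_def)
lemma fsupp_power[simp]: "fsupp F \<Longrightarrow> fsupp (F ^ n)"
  by (induct n) simp_all
lemma fsupp_numeral[simp]: "fsupp (numeral n)" using fsupp_C[of "numeral n"] by simp
lemma fsupp_of_nat[simp]: "fsupp (of_nat n)" using fsupp_C[of "of_nat n"] by simp

definition comp :: "mono \<Rightarrow> nat \<Rightarrow> nat" where
  "comp m r = (case m of (a,b,c) \<Rightarrow> if r = 0 then a else if r = 1 then b else c)"
definition msub :: "mono \<Rightarrow> nat \<Rightarrow> mono" where
  "msub m r = (case m of (a,b,c) \<Rightarrow> if r = 0 then (a-1,b,c) else if r = 1 then (a,b-1,c) else (a,b,c-1))"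

lemma DD_X_Suc[simp]: "DD (Suc 0) X0 = 0" "DD (Suc 0) X1 = 1" "DD (Suc 0) X2 = 0"
  using DD_X by (simp_all add: One_nat_def)

lemma DD_ge2: "r \<ge> 2 \<Longrightarrow> DD r F = DD 2 F" by (simp add: DD_def)

lemma DD_XM: "DD r (XM m) = C (of_nat (comp m r)) * XM (msub m r)"
proof -
  obtain a b c where m: "m = (a,b,c)" by (cases m) auto
  consider "r = 0" | "r = 1" | "r \<ge> 2" by linarith
  then show ?thesis
  proof cases
    case 1 then show ?thesis by (simp add: m XM_def comp_def msub_def DD_mult DD_power mult_ac)
  next
    case 2 then show ?thesis by (simp add: m XM_def comp_def msub_def DD_mult DD_power mult_ac)
  next
    case 3 then show ?thesis by (simp add: DD_ge2[OF 3] m XM_def comp_def msub_def DD_mult DD_power mult_ac)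
  qed
qed

lemma DD_decomp: assumes "fsupp F"
  shows "DD r F = (\<Sum>m\<in>supp F. C (cf F m * of_nat (comp m r)) * XM (msub m r))"
proof -
  have "DD r F = DD r (\<Sum>m\<in>supp F. C (cf F m) * XM m)"
    using fsupp_decomp[OF assms] by (rule arg_cong)
  also have "\<dots> = (\<Sum>m\<in>supp F. C (cf F m * of_nat (comp m r)) * XM (msub m r))"
    by (simp only: DD_sum DD_Cmult DD_XM C_mult mult.assoc)
  finally show ?thesis .
qed

lemma fsupp_DD[simp]: assumes "fsupp F" shows "fsupp (DD r F)"
proof -
  have "fsupp (\<Sum>m\<in>supp F. C (cf F m * of_nat (comp m r)) * XM (msub m r))"
    by (rule fsupp_sum) (use assms in \<open>simp add: fsupp_def\<close>, simp del: C_mult)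
  then show ?thesis using DD_decomp[OF assms] by simp
qed

lemma fsupp_transvF[simp]: "fsupp F \<Longrightarrow> fsupp G \<Longrightarrow> fsupp H \<Longrightarrow> fsupp (transvF n F G H)"
  by (induct n arbitrary: F G H) simp_all

definition LL :: "(nat \<Rightarrow> nat \<Rightarrow> complex) \<Rightarrow> nat \<Rightarrow> F3" where
  "LL A r = C (A r 0) * X0 + C (A r 1) * X1 + C (A r 2) * X2"
definition LM :: "(nat \<Rightarrow> nat \<Rightarrow> complex) \<Rightarrow> mono \<Rightarrow> F3" where
  "LM A m = (case m of (i,j,k) \<Rightarrow> LL A 0 ^ i * LL A 1 ^ j * LL A 2 ^ k)"
definition SF :: "(nat \<Rightarrow> nat \<Rightarrow> complex) \<Rightarrow> F3 \<Rightarrow> F3" where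
  "SF A F = (\<Sum>m\<in>supp F. C (cf F m) * LM A m)"

lemma C_sum: "C (sum f S) = (\<Sum>x\<in>S. C (f x))"
proof (cases "finite S")
  case True then show ?thesis by (induct S rule: finite_induct) simp_all
qed simp

lemma SF_sum: assumes "finite I"
  shows "SF A (\<Sum>i\<in>I. C (f i) * XM (mm i)) = (\<Sum>i\<in>I. C (f i) * LM A (mm i))"
proof -
  let ?F = "\<Sum>i\<in>I. C (f i) * XM (mm i)"
  have cfF: "cf ?F n = (\<Sum>i\<in>{i\<in>I. mm i = n}. f i)" for n
  proof -
    have "cf ?F n = (\<Sum>i\<in>I. if mm i = n then f i else 0)"
      by (auto simp: cf_sum cf_XM intro!: sum.cong)
    also have "\<dots> = (\<Sum>i\<in>{i\<in>I. mm i = n}. f i)"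
      using assms by (simp add: sum.inter_filter)
    finally show ?thesis .
  qed
  have supp: "supp ?F \<subseteq> mm ` I"
  proof
    fix n assume "n \<in> supp ?F"
    then have "(\<Sum>i\<in>{i\<in>I. mm i = n}. f i) \<noteq> 0" by (simp add: supp_def cfF)
    then obtain i where "i \<in> {i\<in>I. mm i = n}" by (meson sum.neutral)
    then show "n \<in> mm ` I" by auto
  qed
  have "SF A ?F = (\<Sum>n\<in>mm ` I. C (cf ?F n) * LM A n)"
    unfolding SF_def by (rule sum.mono_neutral_left) (use assms supp in \<open>auto simp: supp_def\<close>)
  also have "\<dots> = (\<Sum>n\<in>mm ` I. \<Sum>i\<in>{i\<in>I. mm i = n}. C (f i) * LM A (mm i))"
  proof (rule sum.cong)
    fix n assume "n \<in> mm ` I"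
    have "C (cf ?F n) * LM A n = (\<Sum>i\<in>{i\<in>I. mm i = n}. C (f i) * LM A n)"
      by (simp add: cfF C_sum sum_distrib_right)
    also have "\<dots> = (\<Sum>i\<in>{i\<in>I. mm i = n}. C (f i) * LM A (mm i))"
      by (rule sum.cong) auto
    finally show "C (cf ?F n) * LM A n = (\<Sum>i\<in>{i\<in>I. mm i = n}. C (f i) * LM A (mm i))" .
  qed simp
  also have "\<dots> = (\<Sum>i\<in>I. C (f i) * LM A (mm i))"
    by (rule sum.image_gen[symmetric]) (rule assms)
  finally show ?thesis .
qed

lemma SF_decomp: assumes "finite M" "supp F \<subseteq> M"
  shows "SF A F = (\<Sum>m\<in>M. C (cf F m) * LM A m)"
proof -
  have "SF A F = SF A (\<Sum>m\<in>M. C (cf F m) * XM m)"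
    using decomp[OF assms] by (rule arg_cong)
  also have "\<dots> = (\<Sum>m\<in>M. C (cf F m) * LM A m)"
    using SF_sum[OF assms(1), of A "cf F" "\<lambda>m. m"] by simp
  finally show ?thesis .
qed

lemma SF_add: assumes "fsupp F" "fsupp G" shows "SF A (F + G) = SF A F + SF A G"
proof -
  let ?M = "supp F \<union> supp G"
  have fin: "finite ?M" using assms by (simp add: fsupp_def)
  have "SF A (F + G) = (\<Sum>m\<in>?M. C (cf (F + G) m) * LM A m)"
    by (rule SF_decomp[OF fin]) (auto simp: supp_def)
  also have "\<dots> = (\<Sum>m\<in>?M. C (cf F m) * LM A m) + (\<Sum>m\<in>?M. C (cf G m) * LM A m)"
    by (simp add: distrib_right sum.distrib)
  also have "\<dots> = SF A F + SF A G"
    by (simp add: SF_decomp[OF fin, symmetric])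
  finally show ?thesis .
qed

lemma SF_Cmult: assumes "fsupp F" shows "SF A (C c * F) = C c * SF A F"
proof -
  have fin: "finite (supp F)" using assms by (simp add: fsupp_def)
  have "SF A (C c * F) = (\<Sum>m\<in>supp F. C (cf (C c * F) m) * LM A m)"
    by (rule SF_decomp[OF fin]) (auto simp: supp_def)
  also have "\<dots> = C c * SF A F"
    by (simp add: SF_decomp[OF fin subset_refl] sum_distrib_left mult.assoc)
  finally show ?thesis .
qed

lemma SF_neg: "fsupp F \<Longrightarrow> SF A (- F) = - SF A F"
  using SF_Cmult[of F A "-1"] by simp
lemma SF_diff: "fsupp F \<Longrightarrow> fsupp G \<Longrightarrow> SF A (F - G) = SF A F - SF A G"
  using SF_add[of F "- G" A] SF_neg[of G A] by simp
lemma SF_zero[simp]: "SF A 0 = 0" by (simp add: SF_def supp_def)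

lemma LM_madd: "LM A (madd m n) = LM A m * LM A n"
  by (auto simp: LM_def madd_def power_add mult_ac split: prod.split)

lemma SF_mult: assumes "fsupp F" "fsupp G" shows "SF A (F * G) = SF A F * SF A G"
proof -
  have fin: "finite (supp F)" "finite (supp G)" using assms by (simp_all add: fsupp_def)
  have "SF A (F * G) = (\<Sum>p\<in>supp F \<times> supp G. C (cf F (fst p) * cf G (snd p)) * LM A (madd (fst p) (snd p)))"
    using prod_decomp[OF assms] SF_sum[of "supp F \<times> supp G" A "\<lambda>p. cf F (fst p) * cf G (snd p)" "\<lambda>p. madd (fst p) (snd p)"] fin
    by (simp del: C_mult)
  also have "\<dots> = (\<Sum>m\<in>supp F. \<Sum>m'\<in>supp G. C (cf F m) * LM A m * (C (cf G m') * LM A m'))"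
    by (simp add: sum.cartesian_product case_prod_beta LM_madd mult_ac)
  also have "\<dots> = SF A F * SF A G"
    by (simp add: SF_def sum_product)
  finally show ?thesis .
qed

lemma SF_C[simp]: "SF A (C c) = C c"
proof -
  have "SF A (C c) = (\<Sum>m\<in>{(0,0,0)}. C (cf (C c) m) * LM A m)"
    by (rule SF_decomp) (auto simp: supp_def)
  then show ?thesis by (simp add: LM_def)
qed
lemma SF_one[simp]: "SF A 1 = 1" using SF_C[of A 1] by simp

lemma SF_XM[simp]: "SF A (XM m) = LM A m"
proof -
  have "SF A (XM m) = (\<Sum>n\<in>{m}. C (cf (XM m) n) * LM A n)"
    by (rule SF_decomp) (auto simp: supp_def cf_XM)
  then show ?thesis by (simp add: cf_XM)
qed

lemma SF_X[simp]: "SF A X0 = LL A 0" "SF A X1 = LL A 1" "SF A X2 = LL A 2"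
  using SF_XM[of A "(1,0,0)"] SF_XM[of A "(0,1,0)"] SF_XM[of A "(0,0,1)"]
  by (simp_all add: XM_def LM_def)

lemma SF_power: "fsupp F \<Longrightarrow> SF A (F ^ n) = SF A F ^ n"
  by (induct n) (simp_all add: SF_mult)

lemma DD_LL: assumes "k \<le> 2" shows "DD k (LL A r) = C (A r k)"
proof -
  consider "k = 0" | "k = 1" | "k = 2" using assms by linarith
  then show ?thesis by cases (simp_all add: LL_def)
qed

lemma DD_LM: assumes "k \<le> 2"
  shows "DD k (LM A m) = C (of_nat (comp m 0) * A 0 k) * LM A (msub m 0)
     + C (of_nat (comp m 1) * A 1 k) * LM A (msub m 1) + C (of_nat (comp m 2) * A 2 k) * LM A (msub m 2)"
proof -
  obtain a b c where m: "m = (a,b,c)" by (cases m) auto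
  show ?thesis using assms
    by (simp add: m LM_def comp_def msub_def DD_mult DD_power DD_LL algebra_simps)
qed

lemma SF_DD: assumes "fsupp F"
  shows "SF A (DD r F) = (\<Sum>m\<in>supp F. C (cf F m * of_nat (comp m r)) * LM A (msub m r))"
  using DD_decomp[OF assms, of r] SF_sum[of "supp F" A "\<lambda>m. cf F m * of_nat (comp m r)" "\<lambda>m. msub m r"] assms
  by (simp add: fsupp_def del: C_mult)

lemma DD_SF: assumes "fsupp F" "k \<le> 2"
  shows "DD k (SF A F) = C (A 0 k) * SF A (DD 0 F) + C (A 1 k) * SF A (DD 1 F) + C (A 2 k) * SF A (DD 2 F)"
proof -
  have "DD k (SF A F) = (\<Sum>m\<in>supp F. C (cf F m) * DD k (LM A m))"
    by (simp add: SF_def DD_sum)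
  also have "\<dots> = (\<Sum>m\<in>supp F. C (A 0 k) * (C (cf F m * of_nat (comp m 0)) * LM A (msub m 0))
     + C (A 1 k) * (C (cf F m * of_nat (comp m 1)) * LM A (msub m 1))
     + C (A 2 k) * (C (cf F m * of_nat (comp m 2)) * LM A (msub m 2)))"
    by (rule sum.cong) (simp_all only: DD_LM[OF assms(2)] C_mult algebra_simps)
  also have "\<dots> = C (A 0 k) * SF A (DD 0 F) + C (A 1 k) * SF A (DD 1 F) + C (A 2 k) * SF A (DD 2 F)"
    by (simp only: SF_DD[OF assms(1)] sum.distrib sum_distrib_left)
  finally show ?thesis .
qed

definition det3 :: "(nat \<Rightarrow> nat \<Rightarrow> complex) \<Rightarrow> complex" where
  "det3 A = A 0 0 * A 1 1 * A 2 2 - A 0 0 * A 1 2 * A 2 1 - A 0 1 * A 1 0 * A 2 2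
          + A 0 1 * A 1 2 * A 2 0 + A 0 2 * A 1 0 * A 2 1 - A 0 2 * A 1 1 * A 2 0"

lemma transvF_SF: assumes "fsupp F" "fsupp G" "fsupp H"
  shows "transvF n (SF A F) (SF A G) (SF A H) = C (det3 A ^ n) * SF A (transvF n F G H)"
  using assms
proof (induct n arbitrary: F G H)
  case 0 then show ?case by (simp add: SF_mult)
next
  case (Suc n)
  have key: "\<And>P Q R. fsupp P \<Longrightarrow> fsupp Q \<Longrightarrow> fsupp R \<Longrightarrow>
     transvF n (SF A P) (SF A Q) (SF A R) = C (det3 A ^ n) * SF A (transvF n P Q R)"
    using Suc.hyps by blast
  have k2: "0 \<le> (2::nat)" "1 \<le> (2::nat)" "2 \<le> (2::nat)" by simp_all
  have fs: "fsupp F" "fsupp G" "fsupp H" by fact+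
  have Cd: "C (det3 A ^ Suc n) = (C (A 0 0) * C (A 1 1) * C (A 2 2) - C (A 0 0) * C (A 1 2) * C (A 2 1) - C (A 0 1) * C (A 1 0) * C (A 2 2)
          + C (A 0 1) * C (A 1 2) * C (A 2 0) + C (A 0 2) * C (A 1 0) * C (A 2 1) - C (A 0 2) * C (A 1 1) * C (A 2 0)) * C (det3 A ^ n)"
    by (simp only: power_Suc C_mult det3_def C_add C_diff)
  show ?case
    apply (simp only: transvF.simps DD_SF[OF fs(1) k2(1)] DD_SF[OF fs(1) k2(2)] DD_SF[OF fs(1) k2(3)]
       DD_SF[OF fs(2) k2(1)] DD_SF[OF fs(2) k2(2)] DD_SF[OF fs(2) k2(3)]
       DD_SF[OF fs(3) k2(1)] DD_SF[OF fs(3) k2(2)] DD_SF[OF fs(3) k2(3)] transvF_lin)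
    apply (simp only: key fsupp_DD fs Cd SF_add SF_diff fsupp_transvF fsupp_add fsupp_diff)
    apply (simp add: algebra_simps)
    done
qed

lemma SF_sum_gen: "finite I \<Longrightarrow> (\<And>i. i \<in> I \<Longrightarrow> fsupp (f i)) \<Longrightarrow> SF A (sum f I) = (\<Sum>i\<in>I. SF A (f i))"
proof (induct I rule: finite_induct)
  case empty then show ?case by simp
next
  case (insert x F) then show ?case by (simp add: SF_add fsupp_sum)
qed

lemma fsupp_LL[simp]: "fsupp (LL A r)" by (simp add: LL_def)
lemma fsupp_LM[simp]: "fsupp (LM A m)" by (simp add: LM_def split: prod.split)

definition matmul :: "(nat \<Rightarrow> nat \<Rightarrow> complex) \<Rightarrow> (nat \<Rightarrow> nat \<Rightarrow> complex) \<Rightarrow> nat \<Rightarrow> nat \<Rightarrow> complex" where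
  "matmul B A r l = B r 0 * A 0 l + B r 1 * A 1 l + B r 2 * A 2 l"

lemma SF_LL: "SF A (LL B r) = LL (matmul B A) r"
proof -
  have "SF A (LL B r) = C (B r 0) * LL A 0 + C (B r 1) * LL A 1 + C (B r 2) * LL A 2"
    by (simp add: LL_def[of B] SF_add SF_Cmult)
  then show ?thesis by (simp add: LL_def matmul_def algebra_simps)
qed

lemma SF_LM: "SF A (LM B m) = LM (matmul B A) m"
  by (simp add: LM_def SF_mult SF_power SF_LL split: prod.split)

lemma SF_comp: assumes "fsupp F" shows "SF A (SF B F) = SF (matmul B A) F"
proof -
  have fin: "finite (supp F)" using assms by (simp add: fsupp_def)
  have "SF A (SF B F) = (\<Sum>m\<in>supp F. SF A (C (cf F m) * LM B m))"
    unfolding SF_def[of B] by (rule SF_sum_gen[OF fin]) simp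
  also have "\<dots> = (\<Sum>m\<in>supp F. C (cf F m) * LM (matmul B A) m)"
    by (simp only: SF_Cmult[OF fsupp_LM] SF_LM)
  also have "\<dots> = SF (matmul B A) F" by (simp add: SF_def)
  finally show ?thesis .
qed

definition Id3 :: "nat \<Rightarrow> nat \<Rightarrow> complex" where "Id3 r k = (if r = k then 1 else 0)"

lemma SF_Id: assumes "fsupp F" shows "SF Id3 F = F"
proof -
  have "LM Id3 m = XM m" for m by (simp add: LM_def LL_def Id3_def XM_def split: prod.split)
  then show ?thesis using fsupp_decomp[OF assms] by (simp add: SF_def)
qed

definition homog :: "nat \<Rightarrow> F3 \<Rightarrow> bool" where
  "homog d F \<longleftrightarrow> (\<forall>m. cf F m \<noteq> 0 \<longrightarrow> mdeg m = d)"

lemma homogD: "homog d F \<Longrightarrow> cf F m \<noteq> 0 \<Longrightarrow> mdeg m = d"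
  unfolding homog_def by blast

lemma mdeg0: "mdeg m = 0 \<Longrightarrow> m = (0,0,0)"
  by (cases m) (simp add: mdeg_def)
lemma mdeg1: assumes "mdeg m = 1" shows "m \<in> {(1,0,0),(0,1,0),(0,0,1)}"
proof -
  obtain i j k where m: "m = (i,j,k)" by (cases m) auto
  have "i + j + k = 1" using assms by (simp add: m mdeg_def)
  then have "(i = 1 \<and> j = 0 \<and> k = 0) \<or> (i = 0 \<and> j = 1 \<and> k = 0) \<or> (i = 0 \<and> j = 0 \<and> k = 1)" by arith
  then show ?thesis by (auto simp: m)
qed

lemma is_form_homog: "is_form d p \<longleftrightarrow> homog d (T p)"
  by (simp add: is_form_def homog_def)

lemma homog_fsupp: assumes "homog d F" shows "fsupp F"
proof -
  have "supp F \<subseteq> {..d} \<times> {..d} \<times> {..d}"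
  proof
    fix m assume m: "m \<in> supp F"
    obtain i j k where mm: "m = (i,j,k)" by (cases m) auto
    have "i + j + k = d" using m assms by (auto simp: supp_def homog_def mdeg_def mm)
    then show "m \<in> {..d} \<times> {..d} \<times> {..d}" by (simp add: mm)
  qed
  then show ?thesis unfolding fsupp_def by (rule finite_subset) simp
qed

lemma homog_add[simp]: "homog d F \<Longrightarrow> homog d G \<Longrightarrow> homog d (F + G)"
  by (auto simp: homog_def) (metis add.right_neutral)
lemma homog_diff[simp]: "homog d F \<Longrightarrow> homog d G \<Longrightarrow> homog d (F - G)"
  by (auto simp: homog_def) (metis diff_self)
lemma homog_neg[simp]: "homog d F \<Longrightarrow> homog d (- F)"
  by (auto simp: homog_def)
lemma homog_Cmult[simp]: "homog d F \<Longrightarrow> homog d (C c * F)"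
  by (auto simp: homog_def)
lemma homog_zero[simp]: "homog d 0" by (simp add: homog_def)
lemma homog_C[simp]: "homog 0 (C c)" by (simp add: homog_def mdeg_def)
lemma homog_sum: "(\<And>i. i \<in> I \<Longrightarrow> homog d (f i)) \<Longrightarrow> homog d (sum f I)"
proof (cases "finite I")
  case True
  assume "\<And>i. i \<in> I \<Longrightarrow> homog d (f i)"
  with True show ?thesis by (induct I rule: finite_induct) simp_all
qed simp

lemma homog_mult[simp]: assumes "homog a F" "homog b G" shows "homog (a + b) (F * G)"
  unfolding homog_def
proof (intro allI impI)
  fix m assume "cf (F * G) m \<noteq> 0"
  then obtain i j k where m: "m = (i,j,k)" and
    "(\<Sum>x\<le>i. \<Sum>y\<le>j. \<Sum>z\<le>k. cf F (x,y,z) * cf G (i-x, j-y, k-z)) \<noteq> 0"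
    by (cases m) (auto simp: cf_mult pmult_def)
  then obtain x y z where xyz: "x \<le> i" "y \<le> j" "z \<le> k" "cf F (x,y,z) * cf G (i-x, j-y, k-z) \<noteq> 0"
    by (meson atMost_iff sum.neutral)
  have "mdeg (x,y,z) = a" using xyz(4) by (intro homogD[OF assms(1)]) auto
  moreover have "mdeg (i-x,j-y,k-z) = b" using xyz(4) by (intro homogD[OF assms(2)]) auto
  ultimately show "mdeg m = a + b" using xyz by (simp add: m mdeg_def)
qed

lemma homog_X[simp]: "homog 1 X0" "homog 1 X1" "homog 1 X2"
  by (auto simp: homog_def cf_X0 cf_X1 cf_X2 mdeg_def)
lemma homog_X_Suc[simp]: "homog (Suc 0) X0" "homog (Suc 0) X1" "homog (Suc 0) X2"
  using homog_X by (simp_all add: One_nat_def)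

lemma homog_power[simp]: "homog d F \<Longrightarrow> homog (n * d) (F ^ n)"
proof (induct n)
  case 0 then show ?case using homog_C[of 1] by simp
next
  case (Suc n) then show ?case using homog_mult[of d F "n * d" "F ^ n"] by (simp add: add.commute)
qed

lemma homog_DD[simp]: assumes "homog d F" shows "homog (d - 1) (DD i F)"
  unfolding homog_def
proof (intro allI impI)
  fix m assume nz: "cf (DD i F) m \<noteq> 0"
  obtain a b c where m: "m = (a,b,c)" by (cases m) auto
  have "cf F (Suc a,b,c) \<noteq> 0 \<or> cf F (a,Suc b,c) \<noteq> 0 \<or> cf F (a,b,Suc c) \<noteq> 0"
    using nz by (auto simp: cf_DD pderiv3_def m split: if_splits)
  then show "mdeg m = d - 1"
    using homogD[OF assms, of "(Suc a,b,c)"] homogD[OF assms, of "(a,Suc b,c)"] homogD[OF assms, of "(a,b,Suc c)"]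
    by (auto simp: m mdeg_def)
qed

lemma homog_transvF: "homog a F \<Longrightarrow> homog b G \<Longrightarrow> homog c H \<Longrightarrow>
   homog ((a - n) + (b - n) + (c - n)) (transvF n F G H)"
proof (induct n arbitrary: a b c F G H)
  case 0 then show ?case by simp
next
  case (Suc n)
  have "\<And>i j k. homog ((a - Suc n) + (b - Suc n) + (c - Suc n)) (transvF n (DD i F) (DD j G) (DD k H))"
    using Suc.hyps[OF homog_DD[OF Suc.prems(1)] homog_DD[OF Suc.prems(2)] homog_DD[OF Suc.prems(3)]]
    by (simp add: diff_diff_left)
  then show ?case by simp
qed

lemma homog_LL[simp]: "homog 1 (LL A r)" by (simp add: LL_def)

lemma homog_LM: "homog (mdeg m) (LM A m)"
proof -
  obtain i j k where m: "m = (i,j,k)" by (cases m) auto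
  have "homog (i * 1 + j * 1 + k * 1) (LM A m)" unfolding m LM_def prod.case
    by (intro homog_mult homog_power homog_LL)
  then show ?thesis by (simp add: m mdeg_def)
qed

lemma homog_SF: assumes "homog d F" shows "homog d (SF A F)"
  unfolding SF_def
proof (rule homog_sum)
  fix m assume "m \<in> supp F"
  then have "mdeg m = d" using homogD[OF assms] by (auto simp: supp_def)
  then show "homog d (C (cf F m) * LM A m)" using homog_LM[of m A] by simp
qed

lemma homog0_C: assumes "homog 0 F" shows "F = C (cf F (0,0,0))"
proof -
  have "F = (\<Sum>m\<in>{(0,0,0)}. C (cf F m) * XM m)"
  proof (rule decomp)
    show "supp F \<subseteq> {(0,0,0)}"
    proof
      fix m assume "m \<in> supp F"
      then have "mdeg m = 0" using homogD[OF assms] by (simp add: supp_def)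
      then show "m \<in> {(0,0,0)}" using mdeg0 by simp
    qed
  qed simp
  then show ?thesis by (simp add: XM_def)
qed

lemma homog1_LL: assumes "homog 1 F"
  shows "F = C (cf F (1,0,0)) * X0 + C (cf F (0,1,0)) * X1 + C (cf F (0,0,1)) * X2"
proof -
  have "F = (\<Sum>m\<in>{(1,0,0),(0,1,0),(0,0,1)}. C (cf F m) * XM m)"
  proof (rule decomp)
    show "supp F \<subseteq> {(1,0,0),(0,1,0),(0,0,1)}"
    proof
      fix m assume "m \<in> supp F"
      then have "mdeg m = 1" using homogD[OF assms] by (simp add: supp_def)
      then show "m \<in> {(1,0,0),(0,1,0),(0,0,1)}" by (rule mdeg1)
    qed
  qed simp
  then show ?thesis by (simp add: XM_def add.assoc)
qed

definition UX :: "complex \<Rightarrow> complex \<Rightarrow> complex \<Rightarrow> F3" where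
  "UX u1 u2 u3 = C u1 * X0 + C u2 * X1 + C u3 * X2"

lemma T_ux: "T (ux u1 u2 u3) = UX u1 u2 u3"
  by (rule cf_inj) (auto simp: UX_def ux_def cf_X0 cf_X1 cf_X2 fun_eq_iff)

lemma SF_UX: "SF A (UX u1 u2 u3) = UX (u1 * A 0 0 + u2 * A 1 0 + u3 * A 2 0)
   (u1 * A 0 1 + u2 * A 1 1 + u3 * A 2 1) (u1 * A 0 2 + u2 * A 1 2 + u3 * A 2 2)"
proof -
  have "SF A (UX u1 u2 u3) = C u1 * LL A 0 + C u2 * LL A 1 + C u3 * LL A 2"
    by (simp add: UX_def SF_add SF_Cmult)
  then show ?thesis by (simp add: LL_def UX_def algebra_simps)
qed

lemma fsupp_UX[simp]: "fsupp (UX u1 u2 u3)" by (simp add: UX_def)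
lemma homog_UX[simp]: "homog 1 (UX u1 u2 u3)" by (simp add: UX_def)


lemma DD_Xgen[simp]: "DD k X0 = (if k = 0 then 1 else 0)" "DD k X1 = (if k = 1 then 1 else 0)"
  "DD k X2 = (if k \<ge> 2 then 1 else 0)"
  by (cases k; cases "k - 1"; simp add: DD_ge2)+

definition cub :: "complex \<Rightarrow> complex \<Rightarrow> complex \<Rightarrow> complex \<Rightarrow> complex \<Rightarrow> complex \<Rightarrow> complex \<Rightarrow> complex \<Rightarrow> complex \<Rightarrow> complex \<Rightarrow> F3" where
  "cub a300 a210 a201 a120 a111 a102 a030 a021 a012 a003 = C a300 * X0^3 + C a210 * X0^2*X1 + C a201 * X0^2*X2 + C a120 * X0*X1^2 + C a111 * X0*X1*X2 + C a102 * X0*X2^2 + C a030 * X1^3 + C a021 * X1^2*X2 + C a012 * X1*X2^2 + C a003 * X2^3"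

lemma transvF2_cub: "transvF 2 (cub a300 a210 a201 a120 a111 a102 a030 a021 a012 a003) (cub a300 a210 a201 a120 a111 a102 a030 a021 a012 a003) (cub a300 a210 a201 a120 a111 a102 a030 a021 a012 a003) =
  cub (144*a300*a120*a102 - 36*a300*a111^2 - 48*a210^2*a102 + 48*a210*a201*a111 - 48*a201^2*a120) (144*a300*a120*a012 - 144*a300*a111*a021 + 432*a300*a102*a030 - 48*a210^2*a012 + 96*a210*a201*a021 - 48*a210*a120*a102 + 12*a210*a111^2 - 144*a201^2*a030) (432*a300*a120*a003 - 144*a300*a111*a012 + 144*a300*a102*a021 - 144*a210^2*a003 + 96*a210*a201*a012 - 48*a201^2*a021 - 48*a201*a120*a102 + 12*a201*a111^2) (432*a300*a030*a012 - 144*a300*a021^2 - 48*a210*a120*a012 + 144*a210*a102*a030 + 96*a201*a120*a021 - 144*a201*a111*a030 - 48*a120^2*a102 + 12*a120*a111^2) (1296*a300*a030*a003 - 144*a300*a021*a012 - 144*a210*a120*a003 - 48*a210*a111*a012 + 144*a210*a102*a021 + 144*a201*a120*a012 - 48*a201*a111*a021 - 144*a201*a102*a030 - 48*a120*a111*a102 + 12*a111^3) (432*a300*a021*a003 - 144*a300*a012^2 - 144*a210*a111*a003 + 96*a210*a102*a012 + 144*a201*a120*a003 - 48*a201*a102*a021 - 48*a120*a102^2 + 12*a111^2*a102) (144*a210*a030*a012 - 48*a210*a021^2 - 48*a120^2*a012 + 48*a120*a111*a021 - 36*a111^2*a030) (432*a210*a030*a003 - 48*a210*a021*a012 + 144*a201*a030*a012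 - 48*a201*a021^2 - 144*a120^2*a003 + 96*a120*a102*a021 + 12*a111^2*a021 - 144*a111*a102*a030) (144*a210*a021*a003 - 48*a210*a012^2 + 432*a201*a030*a003 - 48*a201*a021*a012 - 144*a120*a111*a003 + 96*a120*a102*a012 + 12*a111^2*a012 - 144*a102^2*a030) (144*a201*a021*a003 - 48*a201*a012^2 - 36*a111^2*a003 + 48*a111*a102*a012 - 48*a102^2*a021)"
  unfolding cub_def
  apply (simp add: eval_nat_numeral DD_mult DD_power)
  apply (algebra)?
  done

definition quart :: "complex \<Rightarrow> complex \<Rightarrow> complex \<Rightarrow> complex \<Rightarrow> complex \<Rightarrow> complex \<Rightarrow> complex \<Rightarrow> complex \<Rightarrow> complex \<Rightarrow> complex \<Rightarrow> complex \<Rightarrow> complex \<Rightarrow> complex \<Rightarrow> complex \<Rightarrow> complex \<Rightarrow> F3" where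
  "quart p400 p310 p301 p220 p211 p202 p130 p121 p112 p103 p040 p031 p022 p013 p004 = C p400 * X0^4 + C p310 * X0^3*X1 + C p301 * X0^3*X2 + C p220 * X0^2*X1^2 + C p211 * X0^2*X1*X2 + C p202 * X0^2*X2^2 + C p130 * X0*X1^3 + C p121 * X0*X1^2*X2 + C p112 * X0*X1*X2^2 + C p103 * X0*X2^3 + C p040 * X1^4 + C p031 * X1^3*X2 + C p022 * X1^2*X2^2 + C p013 * X1*X2^3 + C p004 * X2^4"
definition quad :: "complex \<Rightarrow> complex \<Rightarrow> complex \<Rightarrow> complex \<Rightarrow> complex \<Rightarrow> complex \<Rightarrow> F3" where
  "quad t200 t110 t101 t020 t011 t002 = C t200 * X0^2 + C t110 * X0*X1 + C t101 * X0*X2 + C t020 * X1^2 + C t011 * X1*X2 + C t002 * X2^2"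
definition lin :: "complex \<Rightarrow> complex \<Rightarrow> complex \<Rightarrow> F3" where
  "lin c100 c010 c001 = C c100 * X0 + C c010 * X1 + C c001 * X2"

lemma transvF1_Pi: "transvF 1 (cub h300 h210 h201 h120 h111 h102 h030 h021 h012 h003) (cub a300 a210 a201 a120 a111 a102 a030 a021 a012 a003) X2 = quart (3*h300*a210 - 3*h210*a300) (6*h300*a120 - 6*h120*a300) (3*h300*a111 - 2*h210*a201 + 2*h201*a210 - 3*h111*a300) (9*h300*a030 + 3*h210*a120 - 3*h120*a210 - 9*h030*a300) (6*h300*a021 + h210*a111 + 4*h201*a120 - 4*h120*a201 - h111*a210 - 6*h021*a300) (3*h300*a012 - h210*a102 + 2*h201*a111 - 2*h111*a201 + h102*a210 - 3*h012*a300) (6*h210*a030 - 6*h030*a210) (4*h210*a021 + 6*h201*a030 - h120*a111 + h111*a120 - 6*h030*a201 - 4*h021*a210) (2*h210*a012 + 4*h201*a021 - 2*h120*a102 + 2*h102*a120 - 4*h021*a201 - 2*h012*a210) (2*h201*a012 - h111*a102 + h102*a111 - 2*h012*a201) (3*h120*a030 - 3*h030*a120) (2*h120*a021 + 3*h111*a030 - 3*h030*a111 - 2*h021*a120) (h120*a012 + 2*h111*a021 + 3*h102*a030 - 3*h030*a102 - 2*h021*a111 - h012*a120) (h111*a012 + 2*h102*a021 - 2*h021*a102 - h012*a111) (h102*a012 - h012*a102)"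
  unfolding cub_def quart_def
  apply (simp add: DD_mult DD_power)
  apply (algebra)?
  done

lemma transvF3_Ga: "transvF 3 (quart p400 p310 p301 p220 p211 p202 p130 p121 p112 p103 p040 p031 p022 p013 p004) (cub a300 a210 a201 a120 a111 a102 a030 a021 a012 a003) (X2 * (X2 * X2)) = lin (864*p400*a030 - 216*p310*a120 + 144*p220*a210 - 216*p130*a300) (216*p310*a030 - 144*p220*a120 + 216*p130*a210 - 864*p040*a300) (216*p301*a030 - 72*p211*a120 + 72*p121*a210 - 216*p031*a300)"
  unfolding cub_def quart_def lin_def
  apply (simp add: DD_mult DD_power numeral_3_eq_3)
  apply (algebra)?
  done

lemma transvF2_th: "transvF 2 (cub a300 a210 a201 a120 a111 a102 a030 a021 a012 a003) (cub a300 a210 a201 a120 a111 a102 a030 a021 a012 a003) (X2 * X2) = quad (48*a300*a120 - 16*a210^2) (144*a300*a030 - 16*a210*a120) (48*a300*a021 - 16*a210*a111 + 16*a201*a120) (48*a210*a030 - 16*a120^2) (16*a210*a021 + 48*a201*a030 - 16*a120*a111) (16*a201*a021 - 4*a111^2)"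
  unfolding cub_def quad_def
  apply (simp add: DD_mult DD_power eval_nat_numeral)
  apply (algebra)?
  done

lemma transvF2_F6: "transvF 2 (quad t200 t110 t101 t020 t011 t002) (quad t200 t110 t101 t020 t011 t002) (X2 * X2) = C (16*t200*t020 - 4*t110^2)"
  unfolding quad_def
  apply (simp add: DD_mult DD_power eval_nat_numeral)
  apply (algebra)?
  done


definition HF :: "F3 \<Rightarrow> F3" where "HF F = C (1/12) * transvF 2 F F F"
definition PiU :: "F3 \<Rightarrow> F3 \<Rightarrow> F3" where "PiU U F = C (1/12) * transvF 1 (HF F) F U"
definition GaU :: "F3 \<Rightarrow> F3 \<Rightarrow> F3" where "GaU U F = C (1/432) * transvF 3 (PiU U F) F (U * (U * U))"
definition thU :: "F3 \<Rightarrow> F3 \<Rightarrow> F3" where "thU U F = C (1/4) * transvF 2 F F (U * U)"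
definition F6U :: "F3 \<Rightarrow> F3 \<Rightarrow> complex" where
  "F6U U F = (1/3072) * cf (transvF 2 (thU U F) (thU U F) (U * U)) (0,0,0)"

lemma cub_scale: "C c * cub a300 a210 a201 a120 a111 a102 a030 a021 a012 a003 = cub (c*a300) (c*a210) (c*a201) (c*a120) (c*a111) (c*a102) (c*a030) (c*a021) (c*a012) (c*a003)"
  by (simp add: cub_def algebra_simps)
lemma quart_scale: "C c * quart p400 p310 p301 p220 p211 p202 p130 p121 p112 p103 p040 p031 p022 p013 p004 = quart (c*p400) (c*p310) (c*p301) (c*p220) (c*p211) (c*p202) (c*p130) (c*p121) (c*p112) (c*p103) (c*p040) (c*p031) (c*p022) (c*p013) (c*p004)"
  by (simp add: quart_def algebra_simps)
lemma quad_scale: "C c * quad t200 t110 t101 t020 t011 t002 = quad (c*t200) (c*t110) (c*t101) (c*t020) (c*t011) (c*t002)"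
  by (simp add: quad_def algebra_simps)
lemma lin_scale: "C c * lin c100 c010 c001 = lin (c*c100) (c*c010) (c*c001)"
  by (simp add: lin_def algebra_simps)
lemma lin_cong: "x = x' \<Longrightarrow> y = y' \<Longrightarrow> z = z' \<Longrightarrow> lin x y z = lin x' y' z'" by simp

definition FF :: "complex \<Rightarrow> complex \<Rightarrow> complex \<Rightarrow> complex \<Rightarrow> complex" where
  "FF a300 a210 a120 a030 = (- (27/16)*a300^2*a030^2 + (9/8)*a300*a210*a120*a030 - (1/4)*a300*a120^3 - (1/4)*a210^3*a030 + (1/16)*a210^2*a120^2)"

definition GX :: "complex \<Rightarrow> complex \<Rightarrow> complex \<Rightarrow> complex \<Rightarrow> complex \<Rightarrow> complex \<Rightarrow> complex \<Rightarrow> complex \<Rightarrow> complex \<Rightarrow> complex \<Rightarrow> complex" where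
  "GX a300 a210 a201 a120 a111 a102 a030 a021 a012 a003 = (- 3*a300^2*a120*a021^2 + 9*a300^2*a111*a030*a021 - 27*a300^2*a102*a030^2 + a300*a210^2*a021^2 - 6*a300*a210*a201*a030*a021 - a300*a210*a120*a111*a021 + 18*a300*a210*a120*a102*a030 - 3*a300*a210*a111^2*a030 + 9*a300*a201^2*a030^2 + 2*a300*a201*a120^2*a021 - 3*a300*a201*a120*a111*a030 - 4*a300*a120^3*a102 + a300*a120^2*a111^2 - 4*a210^3*a102*a030 + 4*a210^2*a201*a111*a030 + a210^2*a120^2*a102 - 4*a210*a201^2*a120*a030 - a210*a201*a120^2*a111 + a201^2*a120^3)"

definition RX :: "complex \<Rightarrow> complex \<Rightarrow> complex \<Rightarrow> complex \<Rightarrow> complex \<Rightarrow> complex \<Rightarrow> complex \<Rightarrow> complex" where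
  "RX a300 a210 a201 a120 a111 a030 a021 = (- 3*a300^2*a120*a021^2 + 9*a300^2*a111*a030*a021 + a300*a210^2*a021^2 - 6*a300*a210*a201*a030*a021 - a300*a210*a120*a111*a021 - 3*a300*a210*a111^2*a030 + 9*a300*a201^2*a030^2 + 2*a300*a201*a120^2*a021 - 3*a300*a201*a120*a111*a030 + a300*a120^2*a111^2 + 4*a210^2*a201*a111*a030 - 4*a210*a201^2*a120*a030 - a210*a201*a120^2*a111 + a201^2*a120^3)"

definition GY :: "complex \<Rightarrow> complex \<Rightarrow> complex \<Rightarrow> complex \<Rightarrow> complex \<Rightarrow> complex \<Rightarrow> complex \<Rightarrow> complex \<Rightarrow> complex \<Rightarrow> complex \<Rightarrow> complex" where
  "GY a300 a210 a201 a120 a111 a102 a030 a021 a012 a003 = (- 27*a300^2*a030^2*a012 + 9*a300^2*a030*a021^2 + 18*a300*a210*a120*a030*a012 - 4*a300*a210*a120*a021^2 - 3*a300*a210*a111*a030*a021 - 6*a300*a201*a120*a030*a021 + 9*a300*a201*a111*a030^2 - 4*a300*a120^3*a012 + 4*a300*a120^2*a111*a021 - 3*a300*a120*a111^2*a030 - 4*a210^3*a030*a012 + a210^3*a021^2 + 2*a210^2*a201*a030*a021 + a210^2*a120^2*a012 - a210^2*a120*a111*a021 + a210^2*a111^2*a030 - 3*a210*a201^2*a030^2 - a210*a201*a120*a111*a030 + a201^2*a120^2*a030)"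

definition RY :: "complex \<Rightarrow> complex \<Rightarrow> complex \<Rightarrow> complex \<Rightarrow> complex \<Rightarrow> complex \<Rightarrow> complex \<Rightarrow> complex" where
  "RY a300 a210 a201 a120 a111 a030 a021 = (9*a300^2*a030*a021^2 - 4*a300*a210*a120*a021^2 - 3*a300*a210*a111*a030*a021 - 6*a300*a201*a120*a030*a021 + 9*a300*a201*a111*a030^2 + 4*a300*a120^2*a111*a021 - 3*a300*a120*a111^2*a030 + a210^3*a021^2 + 2*a210^2*a201*a030*a021 - a210^2*a120*a111*a021 + a210^2*a111^2*a030 - 3*a210*a201^2*a030^2 - a210*a201*a120*a111*a030 + a201^2*a120^2*a030)"

definition GZ :: "complex \<Rightarrow> complex \<Rightarrow> complex \<Rightarrow> complex \<Rightarrow> complex \<Rightarrow> complex \<Rightarrow> complex \<Rightarrow> complex \<Rightarrow> complex \<Rightarrow> complex \<Rightarrow> complex" where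
  "GZ a300 a210 a201 a120 a111 a102 a030 a021 a012 a003 = (- 27*a300^2*a030^2*a003 + a300^2*a021^3 + 18*a300*a210*a120*a030*a003 - a300*a210*a111*a021^2 - 2*a300*a201*a120*a021^2 + 3*a300*a201*a111*a030*a021 - 4*a300*a120^3*a003 + a300*a120*a111^2*a021 - a300*a111^3*a030 - 4*a210^3*a030*a003 + a210^2*a201*a021^2 + a210^2*a120^2*a003 - 2*a210*a201^2*a030*a021 - a210*a201*a120*a111*a021 + a210*a201*a111^2*a030 + a201^3*a030^2 + a201^2*a120^2*a021 - a201^2*a120*a111*a030)"

definition RZ :: "complex \<Rightarrow> complex \<Rightarrow> complex \<Rightarrow> complex \<Rightarrow> complex \<Rightarrow> complex \<Rightarrow> complex \<Rightarrow> complex" where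
  "RZ a300 a210 a201 a120 a111 a030 a021 = (a300^2*a021^3 - a300*a210*a111*a021^2 - 2*a300*a201*a120*a021^2 + 3*a300*a201*a111*a030*a021 + a300*a120*a111^2*a021 - a300*a111^3*a030 + a210^2*a201*a021^2 - 2*a210*a201^2*a030*a021 - a210*a201*a120*a111*a021 + a210*a201*a111^2*a030 + a201^3*a030^2 + a201^2*a120^2*a021 - a201^2*a120*a111*a030)"


lemma GaU_cub: "GaU X2 (cub a300 a210 a201 a120 a111 a102 a030 a021 a012 a003) = lin (GX a300 a210 a201 a120 a111 a102 a030 a021 a012 a003) (GY a300 a210 a201 a120 a111 a102 a030 a021 a012 a003) (GZ a300 a210 a201 a120 a111 a102 a030 a021 a012 a003)"
  apply (simp only: GaU_def PiU_def HF_def transvF2_cub cub_scale transvF1_Pi quart_scale transvF3_Ga lin_scale)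
  apply (rule lin_cong)
    apply (simp add: GX_def, algebra)
   apply (simp add: GY_def, algebra)
  apply (simp add: GZ_def, algebra)
  done

lemma F6U_cub: "F6U X2 (cub a300 a210 a201 a120 a111 a102 a030 a021 a012 a003) = FF a300 a210 a120 a030"
  apply (simp only: F6U_def thU_def transvF2_th quad_scale transvF2_F6 cf_C if_True)
  apply (simp add: FF_def, algebra)
  done

lemma GX_split: "GX a300 a210 a201 a120 a111 a102 a030 a021 a012 a003 = 16 * FF a300 a210 a120 a030 * a102 + RX a300 a210 a201 a120 a111 a030 a021"
  by (simp add: GX_def RX_def FF_def, algebra)
lemma GY_split: "GY a300 a210 a201 a120 a111 a102 a030 a021 a012 a003 = 16 * FF a300 a210 a120 a030 * a012 + RY a300 a210 a201 a120 a111 a030 a021"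
  by (simp add: GY_def RY_def FF_def, algebra)
lemma GZ_split: "GZ a300 a210 a201 a120 a111 a102 a030 a021 a012 a003 = 16 * FF a300 a210 a120 a030 * a003 + RZ a300 a210 a201 a120 a111 a030 a021"
  by (simp add: GZ_def RZ_def FF_def, algebra)

lemma prod3_cub: "(C s1 * X0 + C t1 * X1 + C u1 * X2) * (C s2 * X0 + C t2 * X1 + C u2 * X2) * (C s3 * X0 + C t3 * X1 + C u3 * X2) = cub (s1*s2*s3) (s1*s2*t3 + s1*t2*s3 + t1*s2*s3) (s1*s2*u3 + s1*u2*s3 + u1*s2*s3) (s1*t2*t3 + t1*s2*t3 + t1*t2*s3) (s1*t2*u3 + s1*u2*t3 + t1*s2*u3 + t1*u2*s3 + u1*s2*t3 + u1*t2*s3) (s1*u2*u3 + u1*s2*u3 + u1*u2*s3) (t1*t2*t3) (t1*t2*u3 + t1*u2*t3 + u1*t2*t3) (t1*u2*u3 + u1*t2*u3 + u1*u2*t3) (u1*u2*u3)"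
  unfolding cub_def by (simp only: C_mult C_add, algebra)


lemma transvF1_def2: "transvF 1 F G H = DD 0 F * DD 1 G * DD 2 H - DD 0 F * DD 2 G * DD 1 H
   - DD 1 F * DD 0 G * DD 2 H + DD 1 F * DD 2 G * DD 0 H + DD 2 F * DD 0 G * DD 1 H - DD 2 F * DD 1 G * DD 0 H"
  by (simp add: One_nat_def)

lemma transvF_antisym: "transvF 1 F F U = 0"
  unfolding transvF1_def2 by (simp add: algebra_simps)

lemma PiU_zero: "HF F = C c * F \<Longrightarrow> PiU U F = 0"
  by (simp add: PiU_def transvF_C1 transvF_antisym)

lemma GaU_zero: "PiU U F = 0 \<Longrightarrow> GaU U F = 0"
  by (simp add: GaU_def)

lemma W_cub: "X0 * X1 * X2 = cub 0 0 0 0 1 0 0 0 0 0" by (simp add: cub_def)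

lemma transvF2_W: "transvF 2 (X0 * X1 * X2) (X0 * X1 * X2) (X0 * X1 * X2) = C 12 * (X0 * X1 * X2)"
  unfolding W_cub transvF2_cub by (simp add: cub_def)

definition Lmat :: "F3 \<Rightarrow> F3 \<Rightarrow> F3 \<Rightarrow> nat \<Rightarrow> nat \<Rightarrow> complex" where
  "Lmat L1 L2 L3 r k = cf (if r = 0 then L1 else if r = 1 then L2 else L3)
      (if k = 0 then (1,0,0) else if k = 1 then (0,1,0) else (0,0,1))"

lemma LL_Lmat: assumes "homog 1 L1" "homog 1 L2" "homog 1 L3"
  shows "LL (Lmat L1 L2 L3) 0 = L1" "LL (Lmat L1 L2 L3) 1 = L2" "LL (Lmat L1 L2 L3) 2 = L3"
    "LL (Lmat L1 L2 L3) (Suc 0) = L2"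
  using homog1_LL[OF assms(1)] homog1_LL[OF assms(2)] homog1_LL[OF assms(3)]
  by (simp_all add: LL_def Lmat_def)

lemma HF_prod: assumes "homog 1 L1" "homog 1 L2" "homog 1 L3"
  shows "\<exists>c. HF (L1 * L2 * L3) = C c * (L1 * L2 * L3)"
proof -
  let ?A = "Lmat L1 L2 L3"
  let ?W = "X0 * X1 * X2"
  have fW: "fsupp ?W" by simp
  have P: "L1 * L2 * L3 = SF ?A ?W"
    by (simp add: SF_mult LL_Lmat[OF assms])
  have "HF (L1 * L2 * L3) = C (1/12) * (C (det3 ?A ^ 2) * SF ?A (C 12 * ?W))"
    unfolding HF_def P transvF_SF[OF fW fW fW] transvF2_W ..
  also have "\<dots> = (C (1/12) * C 12) * (C (det3 ?A ^ 2) * SF ?A ?W)"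
    unfolding SF_Cmult[OF fW] by (simp only: mult_ac)
  also have "C (1/12) * C 12 = 1" by (subst C_mult[symmetric]) simp
  finally have "HF (L1 * L2 * L3) = C (det3 ?A ^ 2) * SF ?A ?W" by simp
  then show ?thesis unfolding P by blast
qed

lemma cf_Cpow_mult[simp]: "cf (C c ^ n * F) m = c ^ n * cf F m"
  using cf_Cmult[of "c ^ n" F m] by (simp del: cf_Cmult)

lemma fsupp_HF[simp]: "fsupp F \<Longrightarrow> fsupp (HF F)" by (simp add: HF_def)
lemma fsupp_PiU[simp]: "fsupp U \<Longrightarrow> fsupp F \<Longrightarrow> fsupp (PiU U F)" by (simp add: PiU_def)
lemma fsupp_thU[simp]: "fsupp U \<Longrightarrow> fsupp F \<Longrightarrow> fsupp (thU U F)" by (simp add: thU_def)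

lemma HF_SF: assumes "fsupp F" shows "HF (SF A F) = C (det3 A ^ 2) * SF A (HF F)"
  using assms by (simp add: HF_def transvF_SF SF_Cmult)

lemma PiU_SF: assumes "fsupp F" "fsupp U"
  shows "PiU (SF A U) (SF A F) = C (det3 A ^ 3) * SF A (PiU U F)"
proof -
  have "PiU (SF A U) (SF A F) = C (1/12) * (C (det3 A ^ 2) * (C (det3 A ^ 1) * SF A (transvF 1 (HF F) F U)))"
    using assms by (simp only: PiU_def HF_SF transvF_C1 transvF_SF fsupp_HF)
  also have "\<dots> = C (det3 A ^ 3) * SF A (PiU U F)"
    using assms by (simp add: PiU_def SF_Cmult mult_ac power_numeral_reduce)
  finally show ?thesis .
qed

lemma GaU_SF: assumes "fsupp F" "fsupp U"
  shows "GaU (SF A U) (SF A F) = C (det3 A ^ 6) * SF A (GaU U F)"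
proof -
  have "GaU (SF A U) (SF A F) = C (1/432) * (C (det3 A ^ 3) * (C (det3 A ^ 3) * SF A (transvF 3 (PiU U F) F (U * (U * U)))))"
    using assms by (simp only: GaU_def PiU_SF SF_mult[symmetric] transvF_C1 transvF_SF fsupp_PiU fsupp_mult)
  also have "\<dots> = C (det3 A ^ 6) * SF A (GaU U F)"
    using assms by (simp add: GaU_def SF_Cmult mult_ac power_numeral_reduce)
  finally show ?thesis .
qed

lemma thU_SF: assumes "fsupp F" "fsupp U"
  shows "thU (SF A U) (SF A F) = C (det3 A ^ 2) * SF A (thU U F)"
proof -
  have "thU (SF A U) (SF A F) = C (1/4) * (C (det3 A ^ 2) * SF A (transvF 2 F F (U * U)))"
    using assms by (simp only: thU_def SF_mult[symmetric] transvF_SF fsupp_mult)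
  also have "\<dots> = C (det3 A ^ 2) * SF A (thU U F)"
    using assms by (simp add: thU_def SF_Cmult mult_ac)
  finally show ?thesis .
qed

lemma F6U_SF: assumes "homog 3 F" "homog 1 U"
  shows "F6U (SF A U) (SF A F) = det3 A ^ 6 * F6U U F"
proof -
  have fF: "fsupp F" and fU: "fsupp U" using assms homog_fsupp by blast+
  let ?Z = "transvF 2 (thU U F) (thU U F) (U * U)"
  have hth: "homog 2 (thU U F)"
    using homog_transvF[OF assms(1) assms(1) homog_mult[OF assms(2) assms(2)], of 2]
    by (simp add: thU_def numeral_2_eq_2)
  have hZ: "homog 0 ?Z"
    using homog_transvF[OF hth hth homog_mult[OF assms(2) assms(2)], of 2] by simp
  have SZ: "SF A ?Z = ?Z" using homog0_C[OF hZ] by (metis SF_C)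
  have "transvF 2 (thU (SF A U) (SF A F)) (thU (SF A U) (SF A F)) (SF A U * SF A U)
      = C (det3 A ^ 2) * (C (det3 A ^ 2) * (C (det3 A ^ 2) * SF A ?Z))"
    using fF fU by (simp only: thU_SF SF_mult[symmetric] transvF_C1 transvF_C2 transvF_SF fsupp_thU fsupp_mult)
  also have "\<dots> = C (det3 A ^ 6) * ?Z"
    unfolding SZ by (simp add: mult_ac power_numeral_reduce)
  finally show ?thesis by (simp add: F6U_def)
qed

definition compred :: "F3 \<Rightarrow> bool" where
  "compred F \<longleftrightarrow> (\<exists>L1 L2 L3. homog 1 L1 \<and> homog 1 L2 \<and> homog 1 L3 \<and> F = L1 * L2 * L3)"

definition mat3 :: "complex \<Rightarrow> complex \<Rightarrow> complex \<Rightarrow> complex \<Rightarrow> complex \<Rightarrow> complex \<Rightarrow> complex \<Rightarrow> complex \<Rightarrow> complex \<Rightarrow> nat \<Rightarrow> nat \<Rightarrow> complex" where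
  "mat3 a b c d e f g h i = (\<lambda>r k. if r = 0 then (if k = 0 then a else if k = 1 then b else c)
     else if r = 1 then (if k = 0 then d else if k = 1 then e else f)
     else (if k = 0 then g else if k = 1 then h else i))"

lemma LL_cong: "(\<And>k. k < 3 \<Longrightarrow> A r k = B r k) \<Longrightarrow> LL A r = LL B r"
  by (simp add: LL_def)

lemma SF_cong: assumes "\<And>r k. r < 3 \<Longrightarrow> k < 3 \<Longrightarrow> A r k = B r k" shows "SF A F = SF B F"
proof -
  have "LL A r = LL B r" if "r < 3" for r using assms that by (intro LL_cong) auto
  then have "LM A m = LM B m" for m by (simp add: LM_def split: prod.split)
  then show ?thesis by (simp add: SF_def)
qed

lemma exists_frame: assumes "\<not> (u1 = 0 \<and> u2 = 0 \<and> u3 = 0)"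
  shows "\<exists>A B. (\<forall>r k. r < 3 \<longrightarrow> k < 3 \<longrightarrow> matmul A B r k = Id3 r k) \<and> det3 A \<noteq> 0
     \<and> u1 * A 0 0 + u2 * A 1 0 + u3 * A 2 0 = 0 \<and> u1 * A 0 1 + u2 * A 1 1 + u3 * A 2 1 = 0
     \<and> u1 * A 0 2 + u2 * A 1 2 + u3 * A 2 2 = 1"
proof -
  have lt3: "(r::nat) < 3 \<longleftrightarrow> r = 0 \<or> r = 1 \<or> r = 2" for r by auto
  consider "u3 \<noteq> 0" | "u2 \<noteq> 0" | "u1 \<noteq> 0" using assms by blast
  then show ?thesis
  proof cases
    case 1
    show ?thesis
      by (rule exI[of _ "mat3 1 0 0 0 1 0 (-u1/u3) (-u2/u3) (1/u3)"], rule exI[of _ "mat3 1 0 0 0 1 0 u1 u2 u3"])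
         (use 1 in \<open>auto simp: lt3 matmul_def Id3_def mat3_def det3_def field_simps\<close>)
  next
    case 2
    show ?thesis
      by (rule exI[of _ "mat3 1 0 0 (-u1/u2) (-u3/u2) (1/u2) 0 1 0"], rule exI[of _ "mat3 1 0 0 0 0 1 u1 u2 u3"])
         (use 2 in \<open>auto simp: lt3 matmul_def Id3_def mat3_def det3_def field_simps\<close>)
  next
    case 3
    show ?thesis
      by (rule exI[of _ "mat3 (-u2/u1) (-u3/u1) (1/u1) 1 0 0 0 1 0"], rule exI[of _ "mat3 0 1 0 0 0 1 u1 u2 u3"])
         (use 3 in \<open>auto simp: lt3 matmul_def Id3_def mat3_def det3_def field_simps\<close>)
  qed
qed

lemma F6U_UX0: "F6U (UX 0 0 0) F = 0"
  by (simp add: F6U_def thU_def UX_def)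

lemma main_from_e3:
  assumes e3: "\<And>G. homog 3 G \<Longrightarrow> F6U X2 G \<noteq> 0 \<Longrightarrow> GaU X2 G = 0 \<Longrightarrow> compred G"
    and F: "homog 3 F" and nz: "F6U (UX u1 u2 u3) F \<noteq> 0" and Ga: "GaU (UX u1 u2 u3) F = 0"
  shows "compred F"
proof -
  let ?U = "UX u1 u2 u3"
  have u: "\<not> (u1 = 0 \<and> u2 = 0 \<and> u3 = 0)" using nz F6U_UX0 by auto
  obtain A B where AB: "\<forall>r k. r < 3 \<longrightarrow> k < 3 \<longrightarrow> matmul A B r k = Id3 r k" and dA: "det3 A \<noteq> 0"
     and c0: "u1 * A 0 0 + u2 * A 1 0 + u3 * A 2 0 = 0" and c1: "u1 * A 0 1 + u2 * A 1 1 + u3 * A 2 1 = 0"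
     and c2: "u1 * A 0 2 + u2 * A 1 2 + u3 * A 2 2 = 1"
    using exists_frame[OF u] by blast
  have fF: "fsupp F" using F homog_fsupp by blast
  have SU: "SF A ?U = X2" unfolding SF_UX c0 c1 c2 by (simp add: UX_def)
  let ?G = "SF A F"
  have hG: "homog 3 ?G" using F by (rule homog_SF)
  have "F6U X2 ?G = det3 A ^ 6 * F6U ?U F" using F6U_SF[OF F homog_UX, of A u1 u2 u3] SU by simp
  then have nzG: "F6U X2 ?G \<noteq> 0" using dA nz by simp
  have "GaU X2 ?G = C (det3 A ^ 6) * SF A (GaU ?U F)" using GaU_SF[OF fF fsupp_UX, of A u1 u2 u3] SU by simp
  then have GaG: "GaU X2 ?G = 0" using Ga by simp
  obtain L1 L2 L3 where L: "homog 1 L1" "homog 1 L2" "homog 1 L3" "?G = L1 * L2 * L3"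
    using e3[OF hG nzG GaG] unfolding compred_def by blast
  have "F = SF Id3 F" using SF_Id[OF fF] by simp
  also have "\<dots> = SF (matmul A B) F" by (rule SF_cong) (use AB in auto)
  also have "\<dots> = SF B ?G" by (rule SF_comp[OF fF, symmetric])
  also have "\<dots> = SF B L1 * SF B L2 * SF B L3"
    using L homog_fsupp by (simp add: SF_mult)
  finally show ?thesis unfolding compred_def using L homog_SF by blast
qed


lemma cubic_root: assumes "(A::complex) \<noteq> 0" shows "\<exists>r. A*r^3 + B*r^2 + Cc*r + D = 0"
proof -
  have "degree [:D, Cc, B, A:] = 3" using assms by simp
  then have "\<not> constant (poly [:D, Cc, B, A:])" by (simp add: constant_degree)
  then obtain z where "poly [:D, Cc, B, A:] z = 0" using fundamental_theorem_of_algebra by blast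
  then show ?thesis by (intro exI[of _ z]) (simp add: algebra_simps power3_eq_cube power2_eq_square)
qed

lemma quad_fact: assumes "(A::complex) \<noteq> 0" shows "\<exists>z1 z2. P = - A * (z1 + z2) \<and> Q = A * z1 * z2"
proof -
  let ?w = "csqrt (P^2 - 4*A*Q)"
  have w: "?w^2 = P^2 - 4*A*Q" by simp
  show ?thesis
    apply (rule exI[of _ "(- P + ?w) / (2*A)"], rule exI[of _ "(- P - ?w) / (2*A)"])
    using assms w by (simp add: field_simps, algebra)
qed

lemma binfactor: assumes "FF A B Cc D \<noteq> 0"
  shows "\<exists>s1 t1 s2 t2 s3 t3. A = s1*s2*s3 \<and> B = s1*s2*t3 + s1*t2*s3 + t1*s2*s3
    \<and> Cc = s1*t2*t3 + t1*s2*t3 + t1*t2*s3 \<and> D = t1*t2*t3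
    \<and> s1*t2 - s2*t1 \<noteq> 0 \<and> s1*t3 - s3*t1 \<noteq> 0 \<and> s2*t3 - s3*t2 \<noteq> 0"
proof -
  have "\<exists>s1 t1 s2 t2 s3 t3. A = s1*s2*s3 \<and> B = s1*s2*t3 + s1*t2*s3 + t1*s2*s3
    \<and> Cc = s1*t2*t3 + t1*s2*t3 + t1*t2*s3 \<and> D = t1*t2*t3"
  proof (cases "A = 0")
    case False
    obtain r where r: "A*r^3 + B*r^2 + Cc*r + D = 0" using cubic_root[OF False] by blast
    obtain z1 z2 where z: "B + A*r = - A * (z1 + z2)" "Cc + B*r + A*r^2 = A * z1 * z2"
      using quad_fact[OF False] by blast
    show ?thesis
      apply (rule exI[of _ 1], rule exI[of _ "-r"], rule exI[of _ A], rule exI[of _ "-A*z1"],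
             rule exI[of _ 1], rule exI[of _ "-z2"])
      apply (insert r z)
      apply (intro conjI)
         apply algebra+
      done
  next
    case True
    have "B \<noteq> 0" using assms True by (auto simp: FF_def)
    then obtain z1 z2 where z: "Cc = - B * (z1 + z2)" "D = B * z1 * z2"
      using quad_fact by blast
    show ?thesis
      apply (rule exI[of _ 0], rule exI[of _ 1], rule exI[of _ B], rule exI[of _ "-B*z1"],
             rule exI[of _ 1], rule exI[of _ "-z2"])
      using True z by (simp add: algebra_simps)
  qed
  then obtain s1 t1 s2 t2 s3 t3 where st: "A = s1*s2*s3" "B = s1*s2*t3 + s1*t2*s3 + t1*s2*s3"
    "Cc = s1*t2*t3 + t1*s2*t3 + t1*t2*s3" "D = t1*t2*t3" by blast
  have "FF A B Cc D = (1/16) * ((s1*t2 - s2*t1) * (s1*t3 - s3*t1) * (s2*t3 - s3*t2))^2"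
    unfolding st FF_def by algebra
  then have "(s1*t2 - s2*t1) * (s1*t3 - s3*t1) * (s2*t3 - s3*t2) \<noteq> 0" using assms by auto
  then have "s1*t2 - s2*t1 \<noteq> 0" "s1*t3 - s3*t1 \<noteq> 0" "s2*t3 - s3*t2 \<noteq> 0" by auto
  then show ?thesis using st by blast
qed

lemma lagrange:
  assumes d: "s1*t2 - s2*t1 \<noteq> 0" "s1*t3 - s3*t1 \<noteq> 0" "s2*t3 - s3*t2 \<noteq> 0"
  shows "\<exists>u1 u2 u3. (q20::complex) = u1*s2*s3 + u2*s1*s3 + u3*s1*s2
     \<and> q11 = u1*(s2*t3 + t2*s3) + u2*(s1*t3 + t1*s3) + u3*(s1*t2 + t1*s2)
     \<and> q02 = u1*t2*t3 + u2*t1*t3 + u3*t1*t2"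
proof -
  let ?q = "\<lambda>x y. q20*x^2 + q11*x*y + q02*y^2"
  define e1 where "e1 = (s1*t2 - s2*t1)*(s1*t3 - s3*t1)"
  define e2 where "e2 = - ((s1*t2 - s2*t1)*(s2*t3 - s3*t2))"
  define e3 where "e3 = (s1*t3 - s3*t1)*(s2*t3 - s3*t2)"
  have n: "e1 \<noteq> 0" "e2 \<noteq> 0" "e3 \<noteq> 0"
    using d unfolding e1_def e2_def e3_def by auto
  define u1 where "u1 = ?q t1 (-s1) / e1"
  define u2 where "u2 = ?q t2 (-s2) / e2"
  define u3 where "u3 = ?q t3 (-s3) / e3"
  have h: "u1 * e1 = ?q t1 (-s1)" "u2 * e2 = ?q t2 (-s2)" "u3 * e3 = ?q t3 (-s3)"
    using n by (simp_all add: u1_def u2_def u3_def)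
  have "e1 * e2 * e3 \<noteq> 0" using n by simp
  moreover have "e1 * e2 * e3 * q20 = e1 * e2 * e3 * (u1*s2*s3 + u2*s1*s3 + u3*s1*s2)"
    using h unfolding e1_def e2_def e3_def by algebra
  moreover have "e1 * e2 * e3 * q11 = e1 * e2 * e3 * (u1*(s2*t3 + t2*s3) + u2*(s1*t3 + t1*s3) + u3*(s1*t2 + t1*s2))"
    using h unfolding e1_def e2_def e3_def by algebra
  moreover have "e1 * e2 * e3 * q02 = e1 * e2 * e3 * (u1*t2*t3 + u2*t1*t3 + u3*t1*t2)"
    using h unfolding e1_def e2_def e3_def by algebra
  ultimately show ?thesis by auto
qed

lemma mdeg3: assumes "mdeg m = 3"
  shows "m \<in> {(3,0,0),(2,1,0),(2,0,1),(1,2,0),(1,1,1),(1,0,2),(0,3,0),(0,2,1),(0,1,2),(0,0,3)}"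
proof -
  obtain i j k where m: "m = (i,j,k)" by (cases m) auto
  have s: "i + j + k = 3" using assms by (simp add: m mdeg_def)
  have k: "k = 3 - i - j" using s by arith
  have "i = 0 \<or> i = 1 \<or> i = 2 \<or> i = 3" "j = 0 \<or> j = 1 \<or> j = 2 \<or> j = 3" using s by arith+
  then show ?thesis using s unfolding m k by (elim disjE) simp_all
qed

lemma homog3_cub: assumes "homog 3 G"
  shows "G = cub (cf G (3,0,0)) (cf G (2,1,0)) (cf G (2,0,1)) (cf G (1,2,0)) (cf G (1,1,1))
     (cf G (1,0,2)) (cf G (0,3,0)) (cf G (0,2,1)) (cf G (0,1,2)) (cf G (0,0,3))"
proof -
  let ?M = "{(3,0,0),(2,1,0),(2,0,1),(1,2,0),(1,1,1),(1,0,2),(0,3,0),(0,2,1),(0,1,2),(0,0,3)} :: mono set"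
  have "G = (\<Sum>m\<in>?M. C (cf G m) * XM m)"
  proof (rule decomp)
    show "supp G \<subseteq> ?M"
    proof
      fix m assume "m \<in> supp G"
      then have "mdeg m = 3" using homogD[OF assms] by (simp add: supp_def)
      then show "m \<in> ?M" by (rule mdeg3)
    qed
  qed simp
  then show ?thesis by (simp add: cub_def XM_def algebra_simps)
qed

lemma lin_zero: assumes "lin x y z = 0" shows "x = 0" "y = 0" "z = 0"
proof -
  have "cf (lin x y z) (1,0,0) = x" "cf (lin x y z) (0,1,0) = y" "cf (lin x y z) (0,0,1) = z"
    by (simp_all add: lin_def cf_X0 cf_X1 cf_X2)
  then show "x = 0" "y = 0" "z = 0" using assms by simp_all
qed

lemma cub_cong: "a1 = b1 \<Longrightarrow> a2 = b2 \<Longrightarrow> a3 = b3 \<Longrightarrow> a4 = b4 \<Longrightarrow> a5 = b5 \<Longrightarrow> a6 = b6 \<Longrightarrow> a7 = b7 \<Longrightarrow>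
   a8 = b8 \<Longrightarrow> a9 = b9 \<Longrightarrow> a10 = b10 \<Longrightarrow> cub a1 a2 a3 a4 a5 a6 a7 a8 a9 a10 = cub b1 b2 b3 b4 b5 b6 b7 b8 b9 b10"
  by simp

lemma compred_GaU: assumes "compred G" shows "GaU U G = 0"
proof -
  obtain L1 L2 L3 where L: "homog 1 L1" "homog 1 L2" "homog 1 L3" "G = L1 * L2 * L3"
    using assms unfolding compred_def by blast
  obtain c where "HF G = C c * G" using HF_prod[OF L(1-3)] L(4) by blast
  then show ?thesis by (intro GaU_zero PiU_zero)
qed

lemma homog_lin3[simp]: "homog 1 (C s * X0 + C t * X1 + C u * X2)" by simp

theorem e3: assumes hG: "homog 3 G" and nz: "F6U X2 G \<noteq> 0" and Ga: "GaU X2 G = 0"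
  shows "compred G"
proof -
  obtain a300 a210 a201 a120 a111 a102 a030 a021 a012 a003 where
    G: "G = cub a300 a210 a201 a120 a111 a102 a030 a021 a012 a003"
    using homog3_cub[OF hG] by blast
  have FFnz: "FF a300 a210 a120 a030 \<noteq> 0" using nz by (simp add: G F6U_cub)
  have g: "GX a300 a210 a201 a120 a111 a102 a030 a021 a012 a003 = 0"
    "GY a300 a210 a201 a120 a111 a102 a030 a021 a012 a003 = 0"
    "GZ a300 a210 a201 a120 a111 a102 a030 a021 a012 a003 = 0"
    using lin_zero[OF Ga[unfolded G GaU_cub]] by simp_all
  obtain s1 t1 s2 t2 s3 t3 where st: "a300 = s1*s2*s3" "a210 = s1*s2*t3 + s1*t2*s3 + t1*s2*s3"
    "a120 = s1*t2*t3 + t1*s2*t3 + t1*t2*s3" "a030 = t1*t2*t3"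
    and d: "s1*t2 - s2*t1 \<noteq> 0" "s1*t3 - s3*t1 \<noteq> 0" "s2*t3 - s3*t2 \<noteq> 0"
    using binfactor[OF FFnz] by blast
  obtain u1 u2 u3 where uu: "a201 = u1*s2*s3 + u2*s1*s3 + u3*s1*s2"
     "a111 = u1*(s2*t3 + t2*s3) + u2*(s1*t3 + t1*s3) + u3*(s1*t2 + t1*s2)"
     "a021 = u1*t2*t3 + u2*t1*t3 + u3*t1*t2"
    using lagrange[OF d, of a201 a111 a021] by blast
  define b102 where "b102 = s1*u2*u3 + u1*s2*u3 + u1*u2*s3"
  define b012 where "b012 = t1*u2*u3 + u1*t2*u3 + u1*u2*t3"
  define b003 where "b003 = u1*u2*u3"
  let ?G' = "(C s1 * X0 + C t1 * X1 + C u1 * X2) * (C s2 * X0 + C t2 * X1 + C u2 * X2) * (C s3 * X0 + C t3 * X1 + C u3 * X2)"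
  have G': "?G' = cub a300 a210 a201 a120 a111 b102 a030 a021 b012 b003"
    unfolding prod3_cub b102_def b012_def b003_def
    by (rule cub_cong) (simp_all add: st uu algebra_simps)
  have cr: "compred ?G'" unfolding compred_def using homog_lin3 by blast
  have GaG': "GaU X2 ?G' = 0" by (rule compred_GaU[OF cr])
  have g': "GX a300 a210 a201 a120 a111 b102 a030 a021 b012 b003 = 0"
    "GY a300 a210 a201 a120 a111 b102 a030 a021 b012 b003 = 0"
    "GZ a300 a210 a201 a120 a111 b102 a030 a021 b012 b003 = 0"
    using lin_zero[OF GaG'[unfolded G' GaU_cub]] by simp_all
  have "16 * FF a300 a210 a120 a030 * (a102 - b102) = 0"
    using g(1) g'(1) unfolding GX_split by algebra
  then have e1: "a102 = b102" using FFnz by simp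
  have "16 * FF a300 a210 a120 a030 * (a012 - b012) = 0"
    using g(2) g'(2) unfolding GY_split by algebra
  then have e2: "a012 = b012" using FFnz by simp
  have "16 * FF a300 a210 a120 a030 * (a003 - b003) = 0"
    using g(3) g'(3) unfolding GZ_split by algebra
  then have e3: "a003 = b003" using FFnz by simp
  have "G = ?G'" using G G' e1 e2 e3 by simp
  then show ?thesis using cr by simp
qed


theorem mainF:
  assumes F: "homog 3 F" and nz: "F6U (UX u1 u2 u3) F \<noteq> 0"
  shows "(compred F \<longleftrightarrow> (\<exists>c. HF F = C c * F))
       \<and> ((\<exists>c. HF F = C c * F) \<longleftrightarrow> PiU (UX u1 u2 u3) F = 0)
       \<and> (PiU (UX u1 u2 u3) F = 0 \<longleftrightarrow> GaU (UX u1 u2 u3) F = 0)"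
proof -
  let ?U = "UX u1 u2 u3"
  have c2: "compred F \<Longrightarrow> \<exists>c. HF F = C c * F"
    unfolding compred_def using HF_prod by blast
  have g1: "GaU ?U F = 0 \<Longrightarrow> compred F"
    by (rule main_from_e3[OF e3 F nz]) auto
  show ?thesis using c2 g1 PiU_zero GaU_zero by blast
qed

lemma T_hessian: "T (hessian f) = HF (T f)"
  by (simp add: hessian_def HF_def T_transv)
lemma T_Pi_u: "T (Pi_u f u1 u2 u3) = PiU (UX u1 u2 u3) (T f)"
  by (simp add: Pi_u_def PiU_def T_transv T_hessian T_ux)
lemma T_Gamma_u: "T (Gamma_u f u1 u2 u3) = GaU (UX u1 u2 u3) (T f)"
  by (simp add: Gamma_u_def GaU_def T_transv T_Pi_u T_ux)
lemma T_theta_u: "T (theta_u f u1 u2 u3) = thU (UX u1 u2 u3) (T f)"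
  by (simp add: theta_u_def thU_def T_transv T_ux)
lemma F6u_val_F6U: "F6u_val f u1 u2 u3 = F6U (UX u1 u2 u3) (T f)"
proof -
  have "transv 2 (theta_u f u1 u2 u3) (theta_u f u1 u2 u3) (pmult (ux u1 u2 u3) (ux u1 u2 u3)) (0,0,0)
     = cf (T (transv 2 (theta_u f u1 u2 u3) (theta_u f u1 u2 u3) (pmult (ux u1 u2 u3) (ux u1 u2 u3)))) (0,0,0)"
    by simp
  then show ?thesis by (simp add: F6u_val_def F6U_def T_transv T_theta_u T_ux)
qed

lemma compred_T: "completely_reducible f \<longleftrightarrow> compred (T f)"
proof
  assume "completely_reducible f"
  then obtain l1 l2 l3 where "is_form 1 l1" "is_form 1 l2" "is_form 1 l3" "f = pmult (pmult l1 l2) l3"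
    unfolding completely_reducible_def by blast
  then show "compred (T f)" unfolding compred_def is_form_homog by auto
next
  assume "compred (T f)"
  then obtain L1 L2 L3 where L: "homog 1 L1" "homog 1 L2" "homog 1 L3" "T f = L1 * L2 * L3"
    unfolding compred_def by blast
  have "T f = T (pmult (pmult (cf L1) (cf L2)) (cf L3))" using L(4) by simp
  then have "f = pmult (pmult (cf L1) (cf L2)) (cf L3)" using T_eq_iff by blast
  moreover have "is_form 1 (cf L1)" "is_form 1 (cf L2)" "is_form 1 (cf L3)"
    using L by (simp_all add: is_form_homog)
  ultimately show "completely_reducible f" unfolding completely_reducible_def by blast
qed

theorem lemma8p1:
  fixes f :: pol and u1 u2 u3 :: complex
  assumes "is_form 3 f"
    and "F6u_val f u1 u2 u3 \<noteq> 0"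
  shows "(completely_reducible f \<longleftrightarrow> (\<exists>c. hessian f = psmult c f))
       \<and> ((\<exists>c. hessian f = psmult c f) \<longleftrightarrow> Pi_u f u1 u2 u3 = pzero)
       \<and> (Pi_u f u1 u2 u3 = pzero \<longleftrightarrow> Gamma_u f u1 u2 u3 = pzero)"
proof -
  have F: "homog 3 (T f)" using assms(1) by (simp add: is_form_homog)
  have nz: "F6U (UX u1 u2 u3) (T f) \<noteq> 0" using assms(2) by (simp add: F6u_val_F6U)
  have h: "(hessian f = psmult c f) \<longleftrightarrow> HF (T f) = C c * T f" for c
    by (metis T_eq_iff T_hessian T_psmult)
  have p: "Pi_u f u1 u2 u3 = pzero \<longleftrightarrow> PiU (UX u1 u2 u3) (T f) = 0"
    by (metis T_eq_iff T_Pi_u T_pzero)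
  have g: "Gamma_u f u1 u2 u3 = pzero \<longleftrightarrow> GaU (UX u1 u2 u3) (T f) = 0"
    by (metis T_eq_iff T_Gamma_u T_pzero)
  show ?thesis using mainF[OF F nz] unfolding compred_T h p g .
qed


end
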